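(* Let $(G,c)$ be a tensor network template. Suppose there is an integer $d>0$ such that for every edge $e$ the capacity $c_e$ is a power of $d$ (that is, $c_e=d^{m_e}$ with $m_e\in\mathbb{Z}_{\ge0}$). Then $\mathrm{QMF}(G,c)=\mathrm{QMC}(G,c)$.
   Context: A tensor network template $(G,c)$ consists of a finite undirected graph $G$ (multiple edges allowed) with edge set $E$ whose vertex set is partitioned as $S\sqcup T\sqcup V$. Every element of $S$ (inputs) and every element of $T$ (outputs) is an open end of degree $1$; the elements of $V$ are called vertices. For $u\in S\sqcup T$, $e(u)$ denotes the edge incident to $u$. A capacity function $c:E\to\mathbb{Z}_{>0}$ is given, and to each edge $e$ one associates $\mathbb{C}^{c_e}$ with a fixed basis. At each vertex $v$ of degree $d_v$ an ordering $e(v,1),\dots,e(v,d_v)$ of the incident edge-ends is fixed. A tensor assignment $\mathcal T=(\mathcal T_v)_{v\in V}$ chooses $\mathcal T_v\in\bigotimes_{i=1}^{d_v}\mathbb{C}^{c_{e(v,i)}}$ for each $v$. Let $V_S=\bigotimes_{u\in S}\mathbb{C}^{c_{e(u)}}$ and $V_T=\bigotimes_{u\in T}\mathbb{C}^{c_{e(u)}}$. Contracting the network along all edges gives $\beta(G,c;\mathcal T)\in\mathrm{Hom}(V_S,V_T)$, whose matrix entries are $\langle I_T|\beta|I_S\rangle=\sum_W\prod_{v\in V}(\mathcal T_v)_{W|_v}$. Here $W$ ranges over all assignments of basis indices to all edges that agree with $I_S$ on the input edges and with $I_T$ on the output edges, and $W|_v$ is the tuple of indices on $e(v,1),\dots,e(v,d_v)$.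 The quantum max-flow is $\mathrm{QMF}(G,c)=\max_{\mathcal T}\operatorname{rank}\beta(G,c;\mathcal T)$. An edge cut set is a set $C\subseteq E$ for which there is a partition $S\sqcup T\sqcup V=\bar S\sqcup\bar T$ with $S\subseteq\bar S$, $T\subseteq\bar T$, and $C$ equal to the set of edges having one endpoint in $\bar S$ and the other in $\bar T$. The quantum min-cut is $\mathrm{QMC}(G,c)=\min_C\prod_{e\in C}c_e$, the minimum taken over all edge cut sets $C$. *)

theory Defs
  imports Complex_Main
begin

text \<open>
Nodes (inputs S, outputs T, vertices V) have type 'v,
edges have type 'e. The finite edge set is E and every edge e has two endpoints
given by ends e (multiple edges allowed; an edge-end is a pair (e, b) with b a bool
selecting the endpoint).
\<close>

definition endpt :: "('e \<Rightarrow> 'v \<times> 'v) \<Rightarrow> 'e \<Rightarrow> bool \<Rightarrow> 'v" where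
  "endpt ends e b = (if b then snd (ends e) else fst (ends e))"

definition ends_at :: "'e set \<Rightarrow> ('e \<Rightarrow> 'v \<times> 'v) \<Rightarrow> 'v \<Rightarrow> ('e \<times> bool) set" where
  "ends_at E ends u = {(e, b). e \<in> E \<and> endpt ends e b = u}"

definition incident :: "'e set \<Rightarrow> ('e \<Rightarrow> 'v \<times> 'v) \<Rightarrow> 'e \<Rightarrow> 'v \<Rightarrow> bool" where
  "incident E ends e u \<longleftrightarrow> e \<in> E \<and> (fst (ends e) = u \<or> snd (ends e) = u)"

definition tn_template ::
  "'v set \<Rightarrow> 'v set \<Rightarrow> 'v set \<Rightarrow> 'e set \<Rightarrow> ('e \<Rightarrow> 'v \<times> 'v) \<Rightarrow> ('e \<Rightarrow> nat) \<Rightarrow> bool" where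
  "tn_template S T V E ends c \<longleftrightarrow>
     finite S \<and> finite T \<and> finite V \<and> finite E \<and>
     S \<inter> T = {} \<and> S \<inter> V = {} \<and> T \<inter> V = {} \<and>
     (\<forall>e\<in>E. fst (ends e) \<in> S \<union> T \<union> V \<and> snd (ends e) \<in> S \<union> T \<union> V) \<and>
     (\<forall>u\<in>S \<union> T. card (ends_at E ends u) = 1) \<and>
     (\<forall>e\<in>E. c e > 0)"

definition edge_assignments :: "'e set \<Rightarrow> ('e \<Rightarrow> nat) \<Rightarrow> ('e \<Rightarrow> nat) set" where
  "edge_assignments E c = {W. (\<forall>e\<in>E. W e < c e) \<and> (\<forall>e. e \<notin> E \<longrightarrow> W e = 0)}"

definition port_assignments ::
  "'e set \<Rightarrow> ('e \<Rightarrow> 'v \<times> 'v) \<Rightarrow> ('e \<Rightarrow> nat) \<Rightarrow> 'v set \<Rightarrow> ('v \<Rightarrow> nat) set" where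
  "port_assignments E ends c P =
     {I. (\<forall>u\<in>P. \<forall>e. incident E ends e u \<longrightarrow> I u < c e) \<and> (\<forall>u. u \<notin> P \<longrightarrow> I u = 0)}"

text \<open>A tensor assignment gives for each vertex v a function Tn v from index tuples
  on the edge-ends at v (functions on ends_at v, zero elsewhere) to complex numbers.
  Contraction: the matrix entry of beta at (I_T, I_S).\<close>
definition contract ::
  "'v set \<Rightarrow> 'v set \<Rightarrow> 'v set \<Rightarrow> 'e set \<Rightarrow> ('e \<Rightarrow> 'v \<times> 'v) \<Rightarrow> ('e \<Rightarrow> nat) \<Rightarrow>
   ('v \<Rightarrow> (('e \<times> bool) \<Rightarrow> nat) \<Rightarrow> complex) \<Rightarrow> ('v \<Rightarrow> nat) \<Rightarrow> ('v \<Rightarrow> nat) \<Rightarrow> complex" where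
  "contract S T V E ends c Tn IT IS =
     (\<Sum>W \<in> {W \<in> edge_assignments E c.
               (\<forall>u\<in>S. \<forall>e. incident E ends e u \<longrightarrow> W e = IS u) \<and>
               (\<forall>u\<in>T. \<forall>e. incident E ends e u \<longrightarrow> W e = IT u)}.
        \<Prod>v\<in>V. Tn v (\<lambda>(e, b). if (e, b) \<in> ends_at E ends v then W e else 0))"

definition lin_indep_cols :: "'r set \<Rightarrow> ('r \<Rightarrow> 'c \<Rightarrow> complex) \<Rightarrow> 'c set \<Rightarrow> bool" where
  "lin_indep_cols R M J \<longleftrightarrow>
     (\<forall>a :: 'c \<Rightarrow> complex. (\<forall>r\<in>R. (\<Sum>j\<in>J. a j * M r j) = 0) \<longrightarrow> (\<forall>j\<in>J. a j = 0))"

definition mat_rank :: "'r set \<Rightarrow> 'c set \<Rightarrow> ('r \<Rightarrow> 'c \<Rightarrow> complex) \<Rightarrow> nat" where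
  "mat_rank R C M = Max {card J | J. J \<subseteq> C \<and> lin_indep_cols R M J}"

definition QMF ::
  "'v set \<Rightarrow> 'v set \<Rightarrow> 'v set \<Rightarrow> 'e set \<Rightarrow> ('e \<Rightarrow> 'v \<times> 'v) \<Rightarrow> ('e \<Rightarrow> nat) \<Rightarrow> nat" where
  "QMF S T V E ends c =
     Max {mat_rank (port_assignments E ends c T) (port_assignments E ends c S)
            (contract S T V E ends c Tn) | Tn. True}"

definition is_edge_cut ::
  "'v set \<Rightarrow> 'v set \<Rightarrow> 'v set \<Rightarrow> 'e set \<Rightarrow> ('e \<Rightarrow> 'v \<times> 'v) \<Rightarrow> 'e set \<Rightarrow> bool" where
  "is_edge_cut S T V E ends C \<longleftrightarrow>
     (\<exists>Sb Tb. Sb \<inter> Tb = {} \<and> Sb \<union> Tb = S \<union> T \<union> V \<and> S \<subseteq> Sb \<and> T \<subseteq> Tb \<and>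
        C = {e\<in>E. (fst (ends e) \<in> Sb \<and> snd (ends e) \<in> Tb) \<or>
                    (fst (ends e) \<in> Tb \<and> snd (ends e) \<in> Sb)})"

definition QMC ::
  "'v set \<Rightarrow> 'v set \<Rightarrow> 'v set \<Rightarrow> 'e set \<Rightarrow> ('e \<Rightarrow> 'v \<times> 'v) \<Rightarrow> ('e \<Rightarrow> nat) \<Rightarrow> nat" where
  "QMC S T V E ends c = Min {\<Prod>e\<in>C. c e | C. is_edge_cut S T V E ends C}"

end

theory Submission
  imports Defs "HOL-Library.FuncSet"
begin

lemma homog_nontriv:
  fixes B :: "'x \<Rightarrow> 'j \<Rightarrow> complex"
  assumes "finite K" "finite J" "card K < card J"
  shows "\<exists>a. (\<forall>x\<in>K. (\<Sum>j\<in>J. a j * B x j) = 0) \<and> (\<exists>j\<in>J. a j \<noteq> 0)"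
  using assms
proof (induction K arbitrary: J B rule: finite_induct)
  case empty
  then obtain j0 where "j0 \<in> J" by (metis card.empty card_eq_0_iff ex_in_conv less_irrefl)
  then show ?case by (intro exI[of _ "\<lambda>j. if j = j0 then 1 else 0"]) auto
next
  case (insert x K)
  show ?case
  proof (cases "\<forall>j\<in>J. B x j = 0")
    case True
    from insert.IH[of J B] insert.prems insert.hyps obtain a where
      a: "\<forall>y\<in>K. (\<Sum>j\<in>J. a j * B y j) = 0" "\<exists>j\<in>J. a j \<noteq> 0" by auto
    show ?thesis using a True by (intro exI[of _ a]) auto
  next
    case False
    then obtain j0 where j0: "j0 \<in> J" "B x j0 \<noteq> 0" by auto
    define J' where "J' = J - {j0}"
    define B' where "B' = (\<lambda>y j. B y j - B x j / B x j0 * B y j0)"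
    have cJ': "card K < card J'" using insert.prems insert.hyps j0 unfolding J'_def
      by (simp add: card_Diff_singleton)
    from insert.IH[of J' B'] cJ' insert.prems obtain a' where
      a': "\<forall>y\<in>K. (\<Sum>j\<in>J'. a' j * B' y j) = 0" "\<exists>j\<in>J'. a' j \<noteq> 0"
      unfolding J'_def by auto
    define a where "a = (\<lambda>j. if j = j0 then - (\<Sum>j\<in>J'. a' j * B x j) / B x j0 else a' j)"
    have fJ': "finite J'" using insert.prems unfolding J'_def by auto
    have split: "(\<Sum>j\<in>J. a j * B y j) = a j0 * B y j0 + (\<Sum>j\<in>J'. a' j * B y j)" for y
    proof -
      have "(\<Sum>j\<in>J. a j * B y j) = a j0 * B y j0 + (\<Sum>j\<in>J'. a j * B y j)"
        using j0 insert.prems unfolding J'_def by (simp add: sum.remove)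
      moreover have "(\<Sum>j\<in>J'. a j * B y j) = (\<Sum>j\<in>J'. a' j * B y j)"
        by (rule sum.cong) (auto simp: a_def J'_def)
      ultimately show ?thesis by simp
    qed
    have rowx: "(\<Sum>j\<in>J. a j * B x j) = 0"
      unfolding split[of x] using j0 by (simp add: a_def)
    have rowy: "(\<Sum>j\<in>J. a j * B y j) = 0" if "y \<in> K" for y
    proof -
      have "0 = (\<Sum>j\<in>J'. a' j * B' y j)" using a' that by auto
      also have "\<dots> = (\<Sum>j\<in>J'. a' j * B y j - (B y j0 / B x j0) * (a' j * B x j))"
        unfolding B'_def by (rule sum.cong) (auto simp: algebra_simps)
      also have "\<dots> = (\<Sum>j\<in>J'. a' j * B y j) - (B y j0 / B x j0) * (\<Sum>j\<in>J'. a' j * B x j)"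
        by (simp add: sum_subtractf sum_distrib_left)
      also have "\<dots> = (\<Sum>j\<in>J'. a' j * B y j) - (\<Sum>j\<in>J'. a' j * B x j) / B x j0 * B y j0"
        by simp
      also have "\<dots> = (\<Sum>j\<in>J. a j * B y j)"
        unfolding split[of y] by (simp add: a_def)
      finally show ?thesis by simp
    qed
    obtain j1 where j1: "j1 \<in> J'" "a' j1 \<noteq> 0" using a' by auto
    have "a j1 \<noteq> 0" using j1 unfolding a_def J'_def by auto
    then show ?thesis using rowx rowy j1 unfolding J'_def
      by (intro exI[of _ a]) auto
  qed
qed

lemma indep_card_le_factor:
  fixes M :: "'r \<Rightarrow> 'c \<Rightarrow> complex"
  assumes "lin_indep_cols R M J" "finite J" "finite K"
    and "\<And>r j. r \<in> R \<Longrightarrow> j \<in> J \<Longrightarrow> M r j = (\<Sum>x\<in>K. A r x * B x j)"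
  shows "card J \<le> card K"
proof (rule ccontr)
  assume "\<not> card J \<le> card K"
  then obtain a where a: "\<forall>x\<in>K. (\<Sum>j\<in>J. a j * B x j) = 0" "\<exists>j\<in>J. a j \<noteq> 0"
    using homog_nontriv[of K J B] assms by auto
  have "\<forall>r\<in>R. (\<Sum>j\<in>J. a j * M r j) = 0"
  proof
    fix r assume r: "r \<in> R"
    have "(\<Sum>j\<in>J. a j * M r j) = (\<Sum>j\<in>J. \<Sum>x\<in>K. a j * (A r x * B x j))"
      using assms(4) r by (simp add: sum_distrib_left)
    also have "\<dots> = (\<Sum>x\<in>K. A r x * (\<Sum>j\<in>J. a j * B x j))"
      by (subst sum.swap) (simp add: sum_distrib_left algebra_simps)
    also have "\<dots> = 0" using a by simp
    finally show "(\<Sum>j\<in>J. a j * M r j) = 0" .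
  qed
  then have "\<forall>j\<in>J. a j = 0" using assms(1) unfolding lin_indep_cols_def by blast
  then show False using a by auto
qed

lemma bounded_funs:
  fixes B :: "'a \<Rightarrow> nat"
  assumes "finite A"
  shows "finite {f::'a\<Rightarrow>nat. (\<forall>x\<in>A. f x < B x) \<and> (\<forall>x. x \<notin> A \<longrightarrow> f x = 0)}"
    and "card {f::'a\<Rightarrow>nat. (\<forall>x\<in>A. f x < B x) \<and> (\<forall>x. x \<notin> A \<longrightarrow> f x = 0)} = (\<Prod>x\<in>A. B x)"
proof -
  let ?F = "{f::'a\<Rightarrow>nat. (\<forall>x\<in>A. f x < B x) \<and> (\<forall>x. x \<notin> A \<longrightarrow> f x = 0)}"
  have bij: "bij_betw (\<lambda>f. restrict f A) ?F (PiE A (\<lambda>x. {..<B x}))"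
  proof (rule bij_betw_byWitness[where f' = "\<lambda>h x. if x \<in> A then h x else (0::nat)"])
    show "\<forall>a\<in>?F. (\<lambda>x. if x \<in> A then restrict a A x else 0) = a"
      by (simp add: fun_eq_iff)
    show "\<forall>a'\<in>PiE A (\<lambda>x. {..<B x}). restrict (\<lambda>x. if x \<in> A then a' x else 0) A = a'"
    proof
      fix a' assume "a' \<in> PiE A (\<lambda>x. {..<B x})"
      then show "restrict (\<lambda>x. if x \<in> A then a' x else 0) A = a'"
        by (intro ext) (auto simp: PiE_def extensional_def)
    qed
    show "(\<lambda>f. restrict f A) ` ?F \<subseteq> PiE A (\<lambda>x. {..<B x})"
      by (clarsimp simp: restrict_PiE_iff)
    show "(\<lambda>h x. if x \<in> A then h x else 0) ` PiE A (\<lambda>x. {..<B x}) \<subseteq> ?F"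
      by (clarsimp simp: PiE_iff)
  qed
  have "finite (PiE A (\<lambda>x. {..<B x}))" using assms by (simp add: finite_PiE)
  then show "finite ?F" using bij bij_betw_finite by blast
  show "card ?F = (\<Prod>x\<in>A. B x)"
    using bij_betw_same_card[OF bij] assms by (simp add: card_PiE)
qed

lemma finite_edge_assignments: "finite E \<Longrightarrow> finite (edge_assignments E c)"
  unfolding edge_assignments_def by (rule bounded_funs(1))

lemma card_edge_assignments: "finite E \<Longrightarrow> card (edge_assignments E c) = (\<Prod>e\<in>E. c e)"
  unfolding edge_assignments_def by (rule bounded_funs(2))

definition rs :: "'e set \<Rightarrow> ('e \<Rightarrow> nat) \<Rightarrow> 'e \<Rightarrow> nat" where
  "rs A W = (\<lambda>e. if e \<in> A then W e else 0)"

lemma incident_ends_at: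
  "incident E ends e u \<longleftrightarrow> (\<exists>b. (e, b) \<in> ends_at E ends u)"
  unfolding incident_def ends_at_def endpt_def by auto

lemma template_port_incident:
  assumes "tn_template S T V E ends c" "u \<in> S \<union> T"
  shows "\<exists>e. incident E ends e u"
proof -
  have "card (ends_at E ends u) = 1" using assms unfolding tn_template_def by auto
  then obtain p where "p \<in> ends_at E ends u" by (metis card_1_singletonE insertI1)
  then show ?thesis by (cases p) (auto simp: incident_ends_at)
qed

lemma finite_port_assignments:
  assumes "tn_template S T V E ends c" "P \<subseteq> S \<union> T"
  shows "finite (port_assignments E ends c P)"
proof -
  have fST: "finite (S \<union> T)" and fin2: "finite E" using assms(1) unfolding tn_template_def by auto
  have fin: "finite P" "finite E" using finite_subset[OF assms(2) fST] fin2 by auto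
  have "port_assignments E ends c P \<subseteq>
     {f. (\<forall>x\<in>P. f x < (\<Sum>e\<in>E. c e)) \<and> (\<forall>x. x \<notin> P \<longrightarrow> f x = 0)}"
  proof (clarsimp simp: port_assignments_def)
    fix I x assume I: "\<forall>u\<in>P. \<forall>e. incident E ends e u \<longrightarrow> I u < c e" and x: "x \<in> P"
    obtain e where e: "incident E ends e x" using template_port_incident[OF assms(1)] x assms(2) by blast
    then have "e \<in> E" unfolding incident_def by auto
    then have "c e \<le> (\<Sum>e\<in>E. c e)" using fin by (intro member_le_sum) auto
    then show "I x < (\<Sum>e\<in>E. c e)" using I x e by fastforce
  qed
  then show ?thesis by (rule finite_subset[OF _ bounded_funs(1)[OF fin(1)]])
qed

lemma rs_eqD: "rs C W = X \<Longrightarrow> e \<in> C \<Longrightarrow> W e = X e"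
  unfolding rs_def by (drule fun_cong[of _ _ e]) simp

lemma contract_factor:
  fixes S T V Sb Tb :: "'v set" and E C :: "'e set" and ends :: "'e \<Rightarrow> 'v \<times> 'v"
  assumes tmpl: "tn_template S T V E ends c"
    and cut: "Sb \<inter> Tb = {}" "Sb \<union> Tb = S \<union> T \<union> V" "S \<subseteq> Sb" "T \<subseteq> Tb"
    and C_def: "C = {e\<in>E. (fst (ends e) \<in> Sb \<and> snd (ends e) \<in> Tb) \<or>
                    (fst (ends e) \<in> Tb \<and> snd (ends e) \<in> Sb)}"
  shows "\<exists>Af Bf. \<forall>IT IS. contract S T V E ends c Tn IT IS =
            (\<Sum>X\<in>edge_assignments C c. Af IT X * Bf X IS)"
proof -
  have finE: "finite E" and finV: "finite V" using tmpl unfolding tn_template_def by auto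
  have endsN: "fst (ends e) \<in> Sb \<union> Tb" "snd (ends e) \<in> Sb \<union> Tb" if "e \<in> E" for e
    using tmpl that cut(2) unfolding tn_template_def by auto
  define f where "f = (\<lambda>v W. Tn v (\<lambda>(e, b). if (e, b) \<in> ends_at E ends v then W e else 0))"
  define A1 where "A1 = {e\<in>E. fst (ends e) \<in> Sb \<or> snd (ends e) \<in> Sb}"
  define A2 where "A2 = {e\<in>E. fst (ends e) \<in> Tb \<or> snd (ends e) \<in> Tb}"
  have CA: "C = A1 \<inter> A2" unfolding C_def A1_def A2_def using endsN cut(1) by blast
  have EA: "E = A1 \<union> A2" unfolding A1_def A2_def using endsN by blast
  have A1E: "A1 \<subseteq> E" and A2E: "A2 \<subseteq> E" unfolding A1_def A2_def by auto
  have finA1: "finite A1" and finA2: "finite A2" and finC: "finite C"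
    using finE A1E A2E CA by (auto intro: finite_subset)
  define bS where "bS = (\<lambda>IS W. \<forall>u\<in>S. \<forall>e. incident E ends e u \<longrightarrow> W e = (IS::'v\<Rightarrow>nat) u)"
  define bT where "bT = (\<lambda>IT W. \<forall>u\<in>T. \<forall>e. incident E ends e u \<longrightarrow> W e = (IT::'v\<Rightarrow>nat) u)"
  define WW where "WW = (\<lambda>IT IS. {W \<in> edge_assignments E c. bS IS W \<and> bT IT W})"
  define P1 where "P1 = (\<lambda>W. \<Prod>v\<in>V \<inter> Sb. f v W)"
  define P2 where "P2 = (\<lambda>W. \<Prod>v\<in>V \<inter> Tb. f v W)"
  define W1s where "W1s = (\<lambda>X IS. {W1 \<in> edge_assignments A1 c. rs C W1 = X \<and> bS IS W1})"
  define W2s where "W2s = (\<lambda>X IT. {W2 \<in> edge_assignments A2 c. rs C W2 = X \<and> bT IT W2})"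
  define Bf where "Bf = (\<lambda>X IS. \<Sum>W1\<in>W1s X IS. P1 W1)"
  define Af where "Af = (\<lambda>IT X. \<Sum>W2\<in>W2s X IT. P2 W2)"
  define mg where "mg = (\<lambda>(W1::'e\<Rightarrow>nat, W2::'e\<Rightarrow>nat) e. if e \<in> A1 then W1 e else W2 e)"
  have contr: "contract S T V E ends c Tn IT IS = (\<Sum>W\<in>WW IT IS. \<Prod>v\<in>V. f v W)" for IT IS
    unfolding contract_def WW_def bS_def bT_def f_def by simp
  have prodsplit: "(\<Prod>v\<in>V. f v W) = P1 W * P2 W" for W
  proof -
    have "V = (V \<inter> Sb) \<union> (V \<inter> Tb)" using cut(2) by blast
    then have "(\<Prod>v\<in>V. f v W) = (\<Prod>v\<in>(V \<inter> Sb) \<union> (V \<inter> Tb). f v W)" by simp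
    also have "\<dots> = P1 W * P2 W" unfolding P1_def P2_def
      by (rule prod.union_disjoint) (use finV cut(1) in auto)
    finally show ?thesis .
  qed
  have inc1: "e \<in> A1" if "(e, b) \<in> ends_at E ends v" "v \<in> Sb" for e b v
    using that unfolding ends_at_def endpt_def A1_def by (auto split: if_splits)
  have inc2: "e \<in> A2" if "(e, b) \<in> ends_at E ends v" "v \<in> Tb" for e b v
    using that unfolding ends_at_def endpt_def A2_def by (auto split: if_splits)
  have P1rs: "P1 W = P1 (rs A1 W)" for W
    unfolding P1_def f_def
    by (rule prod.cong[OF refl], rule arg_cong[where f="Tn _"]) (auto simp: rs_def fun_eq_iff dest: inc1)
  have P2rs: "P2 W = P2 (rs A2 W)" for W
    unfolding P2_def f_def
    by (rule prod.cong[OF refl], rule arg_cong[where f="Tn _"]) (auto simp: rs_def fun_eq_iff dest: inc2)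
  have incS: "e \<in> A1" if "incident E ends e u" "u \<in> S" for e u
    using that cut(3) unfolding incident_def A1_def by auto
  have incT: "e \<in> A2" if "incident E ends e u" "u \<in> T" for e u
    using that cut(4) unfolding incident_def A2_def by auto
  have finWW: "finite (WW IT IS)" for IT IS
    unfolding WW_def using finite_edge_assignments[OF finE] by auto
  have main: "(\<Sum>W\<in>{W\<in>WW IT IS. rs C W = X}. P1 W * P2 W) = Af IT X * Bf X IS"
    if X: "X \<in> edge_assignments C c" for IT IS X
  proof -
    have bij: "bij_betw (\<lambda>W. (rs A1 W, rs A2 W)) {W\<in>WW IT IS. rs C W = X} (W1s X IS \<times> W2s X IT)"
    proof (rule bij_betw_byWitness[where f' = mg])
      show "\<forall>a\<in>{W \<in> WW IT IS. rs C W = X}. mg (rs A1 a, rs A2 a) = a"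
      proof
        fix W assume "W \<in> {W \<in> WW IT IS. rs C W = X}"
        then have "W \<in> edge_assignments E c" unfolding WW_def by auto
        then show "mg (rs A1 W, rs A2 W) = W"
          unfolding mg_def rs_def edge_assignments_def using EA by (auto simp: fun_eq_iff)
      qed
      show "\<forall>a'\<in>W1s X IS \<times> W2s X IT. (rs A1 (mg a'), rs A2 (mg a')) = a'"
      proof
        fix p assume "p \<in> W1s X IS \<times> W2s X IT"
        then obtain W1 W2 where p: "p = (W1, W2)" "W1 \<in> W1s X IS" "W2 \<in> W2s X IT" by auto
        have W1: "W1 \<in> edge_assignments A1 c" "rs C W1 = X" using p unfolding W1s_def by auto
        have W2: "W2 \<in> edge_assignments A2 c" "rs C W2 = X" using p unfolding W2s_def by auto
        have "rs A1 (mg (W1, W2)) = W1"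
          using W1 unfolding mg_def rs_def edge_assignments_def by (auto simp: fun_eq_iff)
        moreover have "rs A2 (mg (W1, W2)) = W2"
        proof (rule ext)
          fix e
          show "rs A2 (mg (W1, W2)) e = W2 e"
          proof (cases "e \<in> A1 \<and> e \<in> A2")
            case True
            then have "e \<in> C" using CA by auto
            then have "W1 e = W2 e" using rs_eqD[OF W1(2)] rs_eqD[OF W2(2)] by simp
            then show ?thesis using True unfolding mg_def rs_def by auto
          next
            case False
            then show ?thesis using W2(1) unfolding mg_def rs_def edge_assignments_def by auto
          qed
        qed
        ultimately show "(rs A1 (mg p), rs A2 (mg p)) = p" using p by simp
      qed
      show "(\<lambda>W. (rs A1 W, rs A2 W)) ` {W \<in> WW IT IS. rs C W = X} \<subseteq> W1s X IS \<times> W2s X IT"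
      proof
        fix p assume "p \<in> (\<lambda>W. (rs A1 W, rs A2 W)) ` {W \<in> WW IT IS. rs C W = X}"
        then obtain W where W: "W \<in> WW IT IS" "rs C W = X" "p = (rs A1 W, rs A2 W)" by auto
        have Wa: "W \<in> edge_assignments E c" "bS IS W" "bT IT W" using W unfolding WW_def by auto
        have r1: "rs C (rs A1 W) = X" unfolding W(2)[symmetric] using CA by (auto simp: rs_def fun_eq_iff)
        have r2: "rs C (rs A2 W) = X" unfolding W(2)[symmetric] using CA by (auto simp: rs_def fun_eq_iff)
        have e1: "rs A1 W \<in> edge_assignments A1 c"
          using Wa(1) A1E unfolding edge_assignments_def rs_def by auto
        have e2: "rs A2 W \<in> edge_assignments A2 c"
          using Wa(1) A2E unfolding edge_assignments_def rs_def by auto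
        have b1: "bS IS (rs A1 W)" using Wa(2) incS unfolding bS_def rs_def by auto
        have b2: "bT IT (rs A2 W)" using Wa(3) incT unfolding bT_def rs_def by auto
        show "p \<in> W1s X IS \<times> W2s X IT"
          unfolding W(3) W1s_def W2s_def using r1 r2 e1 e2 b1 b2 by simp
      qed
      show "mg ` (W1s X IS \<times> W2s X IT) \<subseteq> {W \<in> WW IT IS. rs C W = X}"
      proof
        fix q assume "q \<in> mg ` (W1s X IS \<times> W2s X IT)"
        then obtain W1 W2 where p: "W1 \<in> W1s X IS" "W2 \<in> W2s X IT" and q: "q = mg (W1, W2)" by auto
        have W1: "W1 \<in> edge_assignments A1 c" "rs C W1 = X" "bS IS W1" using p unfolding W1s_def by auto
        have W2: "W2 \<in> edge_assignments A2 c" "rs C W2 = X" "bT IT W2" using p unfolding W2s_def by auto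
        have agree: "W1 e = W2 e" if "e \<in> C" for e
          using that rs_eqD[OF W1(2)] rs_eqD[OF W2(2)] by simp
        have "mg (W1, W2) \<in> edge_assignments E c"
          using W1(1) W2(1) EA A1E A2E unfolding mg_def edge_assignments_def by auto
        moreover have "bS IS (mg (W1, W2))"
          using W1(3) unfolding bS_def mg_def by (auto dest: incS)
        moreover have "bT IT (mg (W1, W2))"
        proof -
          have "mg (W1, W2) e = IT u" if "u \<in> T" "incident E ends e u" for u e
          proof -
            have e2: "e \<in> A2" using incT that by blast
            have "W2 e = IT u" using W2(3) that unfolding bT_def by auto
            then show ?thesis unfolding mg_def using agree e2 CA by auto
          qed
          then show ?thesis unfolding bT_def by auto
        qed
        moreover have "rs C (mg (W1, W2)) = X"
          unfolding W1(2)[symmetric] using CA by (auto simp: mg_def rs_def fun_eq_iff)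
        ultimately show "q \<in> {W \<in> WW IT IS. rs C W = X}" unfolding WW_def q by auto
      qed
    qed
    have "(\<Sum>W\<in>{W\<in>WW IT IS. rs C W = X}. P1 W * P2 W)
        = (\<Sum>W\<in>{W\<in>WW IT IS. rs C W = X}. (\<lambda>(W1, W2). P1 W1 * P2 W2) (rs A1 W, rs A2 W))"
      using P1rs P2rs by simp
    also have "\<dots> = (\<Sum>p\<in>W1s X IS \<times> W2s X IT. (\<lambda>(W1, W2). P1 W1 * P2 W2) p)"
      by (rule sum.reindex_bij_betw[OF bij])
    also have "\<dots> = (\<Sum>W1\<in>W1s X IS. \<Sum>W2\<in>W2s X IT. P1 W1 * P2 W2)"
      by (simp add: sum.cartesian_product)
    also have "\<dots> = Af IT X * Bf X IS"
      unfolding Af_def Bf_def by (simp add: sum_product mult.commute)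
    finally show ?thesis .
  qed
  have "contract S T V E ends c Tn IT IS = (\<Sum>X\<in>edge_assignments C c. Af IT X * Bf X IS)" for IT IS
  proof -
    have img: "rs C ` WW IT IS \<subseteq> edge_assignments C c"
      unfolding WW_def edge_assignments_def rs_def using CA A1E by auto
    have "contract S T V E ends c Tn IT IS = (\<Sum>W\<in>WW IT IS. P1 W * P2 W)"
      by (simp add: contr prodsplit)
    also have "\<dots> = (\<Sum>X\<in>edge_assignments C c. \<Sum>W\<in>{W\<in>WW IT IS. rs C W = X}. P1 W * P2 W)"
      by (rule sum.group[symmetric, OF finWW finite_edge_assignments[OF finC] img])
    also have "\<dots> = (\<Sum>X\<in>edge_assignments C c. Af IT X * Bf X IS)"
      by (rule sum.cong[OF refl]) (rule main)
    finally show ?thesis .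
  qed
  then show ?thesis by blast
qed


lemma mat_rank_set_finite:
  assumes "finite Cols"
  shows "finite {card J | J. J \<subseteq> Cols \<and> lin_indep_cols R M J}"
proof -
  have "{card J | J. J \<subseteq> Cols \<and> lin_indep_cols R M J} \<subseteq> card ` Pow Cols" by auto
  moreover have "finite (card ` Pow Cols)" using assms by simp
  ultimately show ?thesis by (rule finite_subset)
qed

lemma lin_indep_empty: "lin_indep_cols R M {}"
  unfolding lin_indep_cols_def by simp

lemma mat_rank_le:
  assumes "finite Cols" "\<And>J. J \<subseteq> Cols \<Longrightarrow> lin_indep_cols R M J \<Longrightarrow> card J \<le> k"
  shows "mat_rank R Cols M \<le> k"
  unfolding mat_rank_def
  using mat_rank_set_finite[OF assms(1), of R M] assms(2) lin_indep_empty[of R M]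
  by (subst Max_le_iff) auto

lemma mat_rank_ge:
  assumes "finite Cols" "J \<subseteq> Cols" "lin_indep_cols R M J"
  shows "card J \<le> mat_rank R Cols M"
  unfolding mat_rank_def
  using mat_rank_set_finite[OF assms(1), of R M] assms(2,3)
  by (intro Max_ge) auto

lemma mat_rank_le_card:
  assumes "finite Cols" shows "mat_rank R Cols M \<le> card Cols"
  using assms by (intro mat_rank_le) (auto intro: card_mono)

lemma rank_le_cut:
  fixes S T V :: "'v set" and E C :: "'e set" and ends :: "'e \<Rightarrow> 'v \<times> 'v"
  assumes tmpl: "tn_template S T V E ends c" and cut: "is_edge_cut S T V E ends C"
  shows "mat_rank (port_assignments E ends c T) (port_assignments E ends c S)
           (contract S T V E ends c Tn) \<le> (\<Prod>e\<in>C. c e)"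
proof -
  obtain Sb Tb where sb: "Sb \<inter> Tb = {}" "Sb \<union> Tb = S \<union> T \<union> V" "S \<subseteq> Sb" "T \<subseteq> Tb"
    and C_def: "C = {e\<in>E. (fst (ends e) \<in> Sb \<and> snd (ends e) \<in> Tb) \<or>
                    (fst (ends e) \<in> Tb \<and> snd (ends e) \<in> Sb)}"
    using cut unfolding is_edge_cut_def by blast
  obtain Af Bf where fac: "\<And>IT IS. contract S T V E ends c Tn IT IS =
            (\<Sum>X\<in>edge_assignments C c. Af IT X * Bf X IS)"
    using contract_factor[OF tmpl sb C_def, of Tn] by blast
  have finE: "finite E" using tmpl unfolding tn_template_def by auto
  have finC: "finite C" using finE unfolding C_def by auto
  have finCols: "finite (port_assignments E ends c S)"
    by (rule finite_port_assignments[OF tmpl]) auto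
  show ?thesis
  proof (rule mat_rank_le[OF finCols])
    fix J assume J: "J \<subseteq> port_assignments E ends c S"
      "lin_indep_cols (port_assignments E ends c T) (contract S T V E ends c Tn) J"
    have "card J \<le> card (edge_assignments C c)"
      by (rule indep_card_le_factor[OF J(2) finite_subset[OF J(1) finCols]
            finite_edge_assignments[OF finC]]) (rule fac)
    then show "card J \<le> (\<Prod>e\<in>C. c e)" using card_edge_assignments[OF finC] by simp
  qed
qed

locale netw =
  fixes S T V :: "'v set" and E :: "'e set" and ends :: "'e \<Rightarrow> 'v \<times> 'v" and m :: "'e \<Rightarrow> nat"
  assumes finS: "finite S" and finT: "finite T" and finV: "finite V" and finE: "finite E"
    and disjST: "S \<inter> T = {}" and disjSV: "S \<inter> V = {}" and disjTV: "T \<inter> V = {}"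
    and endsN: "\<And>e. e \<in> E \<Longrightarrow> fst (ends e) \<in> S \<union> T \<union> V \<and> snd (ends e) \<in> S \<union> T \<union> V"
begin

definition netout :: "('e \<Rightarrow> int) \<Rightarrow> 'v \<Rightarrow> int" where
  "netout g x = (\<Sum>e\<in>E. (if fst (ends e) = x then g e else 0) - (if snd (ends e) = x then g e else 0))"

definition feasible :: "('e \<Rightarrow> int) \<Rightarrow> bool" where
  "feasible g \<longleftrightarrow> (\<forall>e. e \<notin> E \<longrightarrow> g e = 0) \<and> (\<forall>e\<in>E. \<bar>g e\<bar> \<le> int (m e)) \<and>
     (\<forall>v\<in>V. netout g v = 0) \<and> (\<forall>s\<in>S. netout g s \<ge> 0) \<and> (\<forall>t\<in>T. netout g t \<le> 0)"

definition fval :: "('e \<Rightarrow> int) \<Rightarrow> int" where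
  "fval g = (\<Sum>s\<in>S. netout g s)"

definition dtl :: "'e \<times> bool \<Rightarrow> 'v" where
  "dtl d = (if snd d then fst (ends (fst d)) else snd (ends (fst d)))"
definition dhd :: "'e \<times> bool \<Rightarrow> 'v" where
  "dhd d = (if snd d then snd (ends (fst d)) else fst (ends (fst d)))"
definition dsign :: "'e \<times> bool \<Rightarrow> int" where
  "dsign d = (if snd d then 1 else -1)"
definition delta :: "'e \<times> bool \<Rightarrow> 'e \<Rightarrow> int" where
  "delta d = (\<lambda>e. if e = fst d then dsign d else 0)"
definition resid :: "('e \<Rightarrow> int) \<Rightarrow> 'e \<times> bool \<Rightarrow> bool" where
  "resid g d \<longleftrightarrow> fst d \<in> E \<and> g (fst d) * dsign d < int (m (fst d))"

fun walk :: "'v \<Rightarrow> ('e \<times> bool) list \<Rightarrow> 'v \<Rightarrow> bool" where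
  "walk x [] y \<longleftrightarrow> x = y"
| "walk x (d # ds) y \<longleftrightarrow> dtl d = x \<and> walk (dhd d) ds y"

fun aug :: "('e \<times> bool) list \<Rightarrow> 'e \<Rightarrow> int" where
  "aug [] = (\<lambda>e. 0)"
| "aug (d # ds) = (\<lambda>e. delta d e + aug ds e)"

lemma walk_append: "walk x (as @ bs) z \<longleftrightarrow> (\<exists>y. walk x as y \<and> walk y bs z)"
  by (induction as arbitrary: x) auto

lemma netout_add: "netout (\<lambda>e. g e + h e) x = netout g x + netout h x"
  unfolding netout_def by (simp add: sum.distrib[symmetric]) (rule sum.cong; auto)

lemma netout_zero: "netout (\<lambda>e. 0) x = 0"
  unfolding netout_def by simp

lemma netout_delta:
  assumes "fst d \<in> E"
  shows "netout (delta d) x = of_bool (x = dtl d) - of_bool (x = dhd d)"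
proof -
  have "netout (delta d) x = (\<Sum>e\<in>E. if e = fst d then
      (if fst (ends e) = x then dsign d else 0) - (if snd (ends e) = x then dsign d else 0) else 0)"
    unfolding netout_def delta_def by (rule sum.cong) auto
  also have "\<dots> = (if fst (ends (fst d)) = x then dsign d else 0) - (if snd (ends (fst d)) = x then dsign d else 0)"
    using assms finE by (simp add: sum.delta')
  also have "\<dots> = of_bool (x = dtl d) - of_bool (x = dhd d)"
    unfolding dsign_def dtl_def dhd_def by auto
  finally show ?thesis .
qed

lemma netout_aug:
  assumes "walk x ds y" "\<forall>d\<in>set ds. fst d \<in> E"
  shows "netout (aug ds) z = of_bool (z = x) - of_bool (z = y)"
  using assms
proof (induction ds arbitrary: x)
  case Nil then show ?case by (simp add: netout_zero)
next
  case (Cons d ds)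
  have "netout (aug (d # ds)) z = netout (delta d) z + netout (aug ds) z"
    by (simp add: netout_add)
  also have "\<dots> = (of_bool (z = dtl d) - of_bool (z = dhd d)) + (of_bool (z = dhd d) - of_bool (z = y))"
    using Cons.IH[of "dhd d"] Cons.prems netout_delta[of d z] by simp
  also have "\<dots> = of_bool (z = x) - of_bool (z = y)" using Cons.prems by simp
  finally show ?case .
qed

lemma aug_notin: "e \<notin> fst ` set ds \<Longrightarrow> aug ds e = 0"
  by (induction ds) (auto simp: delta_def)

lemma aug_cap:
  assumes "distinct (map fst ds)" "\<forall>d\<in>set ds. resid g d" "\<forall>e\<in>E. \<bar>g e\<bar> \<le> int (m e)" "e \<in> E"
  shows "\<bar>g e + aug ds e\<bar> \<le> int (m e)"
  using assms
proof (induction ds)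
  case Nil then show ?case by simp
next
  case (Cons d ds)
  show ?case
  proof (cases "e = fst d")
    case True
    then have "aug ds e = 0" using Cons.prems(1) by (intro aug_notin) auto
    moreover have "g e * dsign d < int (m e)" using Cons.prems(2) True unfolding resid_def by auto
    ultimately show ?thesis using True Cons.prems(3,4)
      by (auto simp: delta_def dsign_def split: if_splits)
  next
    case False
    then show ?thesis using Cons by (simp add: delta_def)
  qed
qed

definition reach :: "('e \<Rightarrow> int) \<Rightarrow> 'v set" where
  "reach g = {y. \<exists>s\<in>S. \<exists>ds. walk s ds y \<and> distinct (map fst ds) \<and> (\<forall>d\<in>set ds. resid g d)}"

lemma S_reach: "S \<subseteq> reach g"
  unfolding reach_def by (auto intro!: exI[of _ "[]"])

lemma dart_ends: "fst d = fst d' \<Longrightarrow> dtl d' \<noteq> dhd d \<Longrightarrow> dhd d' = dhd d"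
  unfolding dtl_def dhd_def by (cases "snd d"; cases "snd d'") auto

lemma reach_closed:
  assumes "y \<in> reach g" "resid g d" "dtl d = y"
  shows "dhd d \<in> reach g"
proof -
  obtain s ds where s: "s \<in> S" "walk s ds y" "distinct (map fst ds)" "\<forall>d\<in>set ds. resid g d"
    using assms(1) unfolding reach_def by auto
  show ?thesis
  proof (cases "fst d \<in> fst ` set ds")
    case False
    have "walk s (ds @ [d]) (dhd d)" using s(2) assms(3) by (auto simp: walk_append)
    moreover have "distinct (map fst (ds @ [d]))" using s(3) False by auto
    ultimately show ?thesis using s(1,4) assms(2) unfolding reach_def by fastforce
  next
    case True
    then obtain d' where d': "d' \<in> set ds" "fst d' = fst d" by auto
    then obtain as bs where ds: "ds = as @ d' # bs" by (meson split_list)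
    have w1: "walk s as (dtl d')" using s(2) ds by (auto simp: walk_append)
    have dis: "distinct (map fst (as @ [d']))" using s(3) ds by auto
    have res: "\<forall>d\<in>set (as @ [d']). resid g d" using s(4) ds by auto
    show ?thesis
    proof (cases "dtl d' = dhd d")
      case True
      have "distinct (map fst as)" using dis by simp
      then show ?thesis using s(1) w1 True res unfolding reach_def by fastforce
    next
      case False
      then have "dhd d' = dhd d" using dart_ends[OF d'(2)[symmetric]] by simp
      then have "walk s (as @ [d']) (dhd d)" using w1 by (auto simp: walk_append)
      then show ?thesis using s(1) dis res unfolding reach_def by blast
    qed
  qed
qed

definition cutset :: "'v set \<Rightarrow> 'v set \<Rightarrow> 'e set" where
  "cutset Sb Tb = {e\<in>E. (fst (ends e) \<in> Sb \<and> snd (ends e) \<in> Tb) \<or>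
                          (fst (ends e) \<in> Tb \<and> snd (ends e) \<in> Sb)}"

lemma netout_bound:
  assumes "feasible g" shows "netout g x \<le> (\<Sum>e\<in>E. int (m e))"
  unfolding netout_def
proof (rule sum_mono)
  fix e assume e: "e \<in> E"
  have "\<bar>g e\<bar> \<le> int (m e)" using assms e unfolding feasible_def by auto
  then show "(if fst (ends e) = x then g e else 0) - (if snd (ends e) = x then g e else 0) \<le> int (m e)"
    by auto
qed

lemma fval_nonneg: "feasible g \<Longrightarrow> fval g \<ge> 0"
  unfolding fval_def feasible_def by (auto intro: sum_nonneg)

lemma feasible_zero: "feasible (\<lambda>e. 0)"
  unfolding feasible_def by (simp add: netout_zero)

lemma augment:
  assumes g: "feasible g" and st: "s \<in> S" "t \<in> T" and w: "walk s ds t" "distinct (map fst ds)"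
    "\<forall>d\<in>set ds. resid g d"
  shows "feasible (\<lambda>e. g e + aug ds e) \<and> fval (\<lambda>e. g e + aug ds e) = fval g + 1"
proof -
  have dE: "\<forall>d\<in>set ds. fst d \<in> E" using w(3) unfolding resid_def by auto
  have no: "netout (\<lambda>e. g e + aug ds e) x = netout g x + (of_bool (x = s) - of_bool (x = t))" for x
    by (simp add: netout_add netout_aug[OF w(1) dE])
  have sdiff: "s \<noteq> t" using st disjST by auto
  have f1: "\<forall>e. e \<notin> E \<longrightarrow> g e + aug ds e = 0"
    using g dE unfolding feasible_def by (auto intro!: aug_notin)
  have f2: "\<forall>e\<in>E. \<bar>g e + aug ds e\<bar> \<le> int (m e)"
    using g w unfolding feasible_def by (auto intro!: aug_cap)
  have f3: "\<forall>v\<in>V. netout (\<lambda>e. g e + aug ds e) v = 0"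
    using g st disjSV disjTV unfolding feasible_def by (auto simp: no)
  have f4: "\<forall>x\<in>S. netout (\<lambda>e. g e + aug ds e) x \<ge> 0"
    using g st disjST unfolding feasible_def by (auto simp: no)
  have f5: "\<forall>x\<in>T. netout (\<lambda>e. g e + aug ds e) x \<le> 0"
    using g st disjST unfolding feasible_def by (auto simp: no)
  have "fval (\<lambda>e. g e + aug ds e) = (\<Sum>x\<in>S. netout g x + (of_bool (x = s) - of_bool (x = t)))"
    unfolding fval_def by (simp add: no)
  also have "\<dots> = fval g + ((\<Sum>x\<in>S. of_bool (x = s)) - (\<Sum>x\<in>S. of_bool (x = t)))"
    unfolding fval_def by (simp add: sum.distrib sum_subtractf)
  also have "(\<Sum>x\<in>S. (of_bool (x = s) :: int)) = 1"
    using st finS by (simp add: of_bool_def sum.delta)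
  also have "(\<Sum>x\<in>S. (of_bool (x = t) :: int)) = 0"
    using st disjST finS by (auto simp: of_bool_def sum.delta)
  finally show ?thesis using f1 f2 f3 f4 f5 unfolding feasible_def by simp
qed

lemma max_flow_min_cut:
  "\<exists>g Sb Tb. feasible g \<and> Sb \<inter> Tb = {} \<and> Sb \<union> Tb = S \<union> T \<union> V \<and> S \<subseteq> Sb \<and> T \<subseteq> Tb \<and>
     fval g = (\<Sum>e\<in>cutset Sb Tb. int (m e))"
proof -
  define M where "M = (\<Sum>e\<in>E. int (m e))"
  have bnd: "nat (fval g) < nat (int (card S) * M) + 1" if "feasible g" for g
  proof -
    have "fval g \<le> of_nat (card S) * M"
      unfolding fval_def M_def by (rule sum_bounded_above) (use netout_bound[OF that] in auto)
    then show ?thesis by linarith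
  qed
  obtain g where g: "feasible g" and gmax: "\<And>h. feasible h \<Longrightarrow> nat (fval h) \<le> nat (fval g)"
    using Lattices_Big.ex_has_greatest_nat[of feasible "\<lambda>_. 0" "\<lambda>g. nat (fval g)" "nat (int (card S) * M) + 1"]
      feasible_zero bnd by blast
  have noT: "t \<notin> reach g" if "t \<in> T" for t
  proof
    assume "t \<in> reach g"
    then obtain s ds where s: "s \<in> S" "walk s ds t" "distinct (map fst ds)" "\<forall>d\<in>set ds. resid g d"
      unfolding reach_def by auto
    from augment[OF g s(1) that s(2-4)] have a: "feasible (\<lambda>e. g e + aug ds e)"
      "fval (\<lambda>e. g e + aug ds e) = fval g + 1" by auto
    have "nat (fval (\<lambda>e. g e + aug ds e)) \<le> nat (fval g)" by (rule gmax[OF a(1)])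
    then show False using a(2) fval_nonneg[OF g] by simp
  qed
  define N where "N = S \<union> T \<union> V"
  define Sb where "Sb = reach g \<inter> N"
  define Tb where "Tb = N - reach g"
  have finN: "finite N" unfolding N_def using finS finT finV by simp
  have finSb: "finite Sb" unfolding Sb_def using finN by simp
  have SSb: "S \<subseteq> Sb" unfolding Sb_def N_def using S_reach by auto
  have TTb: "T \<subseteq> Tb" unfolding Tb_def N_def using noT by auto
  have cutp: "Sb \<inter> Tb = {}" "Sb \<union> Tb = N" unfolding Sb_def Tb_def by auto
  have "fval g = (\<Sum>x\<in>Sb. netout g x)"
  proof -
    have "(\<Sum>x\<in>Sb. netout g x) = (\<Sum>x\<in>Sb - S. netout g x) + (\<Sum>x\<in>S. netout g x)"
      by (rule sum.subset_diff[OF SSb finSb])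
    moreover have "(\<Sum>x\<in>Sb - S. netout g x) = 0"
    proof (rule sum.neutral, rule ballI)
      fix x assume "x \<in> Sb - S"
      then have "x \<in> V" unfolding Sb_def N_def using noT by auto
      then show "netout g x = 0" using g unfolding feasible_def by auto
    qed
    ultimately show ?thesis unfolding fval_def by simp
  qed
  also have "\<dots> = (\<Sum>e\<in>E. (if fst (ends e) \<in> Sb then g e else 0) - (if snd (ends e) \<in> Sb then g e else 0))"
    unfolding netout_def
    by (subst sum.swap) (simp add: sum_subtractf sum.delta' finSb)
  also have "\<dots> = (\<Sum>e\<in>E. if e \<in> cutset Sb Tb then int (m e) else 0)"
  proof (rule sum.cong[OF refl])
    fix e assume e: "e \<in> E"
    have cap: "\<bar>g e\<bar> \<le> int (m e)" using g e unfolding feasible_def by auto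
    have eN: "fst (ends e) \<in> N" "snd (ends e) \<in> N" using endsN[OF e] unfolding N_def by auto
    show "(if fst (ends e) \<in> Sb then g e else 0) - (if snd (ends e) \<in> Sb then g e else 0) =
          (if e \<in> cutset Sb Tb then int (m e) else 0)"
    proof (cases "fst (ends e) \<in> Sb"; cases "snd (ends e) \<in> Sb")
      assume a: "fst (ends e) \<in> Sb" "snd (ends e) \<in> Sb"
      then show ?thesis unfolding cutset_def using cutp(1) by auto
    next
      assume a: "fst (ends e) \<notin> Sb" "snd (ends e) \<notin> Sb"
      then show ?thesis unfolding cutset_def using cutp eN by auto
    next
      assume a: "fst (ends e) \<in> Sb" "snd (ends e) \<notin> Sb"
      have "g e = int (m e)"
      proof (rule ccontr)
        assume "g e \<noteq> int (m e)"
        then have "resid g (e, True)" using cap e unfolding resid_def dsign_def by auto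
        moreover have "dtl (e, True) \<in> reach g" using a unfolding dtl_def Sb_def by auto
        ultimately have "dhd (e, True) \<in> reach g" using reach_closed by blast
        then show False using a eN unfolding dhd_def Sb_def by auto
      qed
      moreover have "e \<in> cutset Sb Tb" unfolding cutset_def using a e eN cutp by auto
      ultimately show ?thesis using a by simp
    next
      assume a: "fst (ends e) \<notin> Sb" "snd (ends e) \<in> Sb"
      have "- g e = int (m e)"
      proof (rule ccontr)
        assume "- g e \<noteq> int (m e)"
        then have "resid g (e, False)" using cap e unfolding resid_def dsign_def by auto
        moreover have "dtl (e, False) \<in> reach g" using a unfolding dtl_def Sb_def by auto
        ultimately have "dhd (e, False) \<in> reach g" using reach_closed by blast
        then show False using a eN unfolding dhd_def Sb_def by auto
      qed
      moreover have "e \<in> cutset Sb Tb" unfolding cutset_def using a e eN cutp by auto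
      ultimately show ?thesis using a by simp
    qed
  qed
  also have "\<dots> = (\<Sum>e\<in>cutset Sb Tb. int (m e))"
    unfolding cutset_def using finE by (simp add: sum.inter_filter)
  finally show ?thesis using g cutp SSb TTb unfolding N_def by blast
qed

end

locale lower = netw S T V E ends m for S T V :: "'v set" and E :: "'e set" and ends and m +
  fixes c :: "'e \<Rightarrow> nat" and d :: nat and g :: "'e \<Rightarrow> int"
  assumes dpos: "d > 0" and cpow: "\<And>e. e \<in> E \<Longrightarrow> c e = d ^ m e"
    and deg: "\<And>x. x \<in> S \<union> T \<Longrightarrow> card (ends_at E ends x) = 1"
    and gfeas: "feasible g"
begin

definition a :: "'e \<Rightarrow> nat" where "a e = nat \<bar>g e\<bar>"
definition utl :: "'e \<Rightarrow> 'v" where "utl e = (if g e > 0 then fst (ends e) else snd (ends e))"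
definition uhd :: "'e \<Rightarrow> 'v" where "uhd e = (if g e > 0 then snd (ends e) else fst (ends e))"
definition U :: "('e \<times> nat) set" where "U = {(e, i). e \<in> E \<and> i < a e}"
definition inU :: "'v \<Rightarrow> ('e \<times> nat) set" where "inU v = {u \<in> U. uhd (fst u) = v}"
definition outU :: "'v \<Rightarrow> ('e \<times> nat) set" where "outU v = {u \<in> U. utl (fst u) = v}"

lemma U_Sigma: "U = Sigma E (\<lambda>e. {..<a e})"
  unfolding U_def by auto

lemma finU: "finite U"
  unfolding U_Sigma using finE by auto

lemma a_le_m: "e \<in> E \<Longrightarrow> a e \<le> m e"
  using gfeas unfolding feasible_def a_def by fastforce

lemma gzero: "e \<notin> E \<Longrightarrow> g e = 0"
  using gfeas unfolding feasible_def by auto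

lemma deg_unique:
  assumes "x \<in> S \<union> T"
  shows "\<exists>e0\<in>E. (fst (ends e0) = x \<or> snd (ends e0) = x) \<and> \<not> (fst (ends e0) = x \<and> snd (ends e0) = x) \<and>
           (\<forall>e\<in>E. e \<noteq> e0 \<longrightarrow> fst (ends e) \<noteq> x \<and> snd (ends e) \<noteq> x)"
proof -
  obtain p where p: "ends_at E ends x = {p}" using deg[OF assms] by (meson card_1_singletonE)
  obtain e0 b0 where p0: "p = (e0, b0)" by (cases p)
  have e0: "e0 \<in> E" "endpt ends e0 b0 = x" using p p0 unfolding ends_at_def by auto
  have mem: "(e, b) \<in> ends_at E ends x \<longleftrightarrow> e \<in> E \<and> endpt ends e b = x" for e b
    unfolding ends_at_def by auto
  have F: "fst (ends e) = x \<Longrightarrow> e \<in> E \<Longrightarrow> (e, False) = p" for e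
    using mem[of e False] p unfolding endpt_def by auto
  have Sn: "snd (ends e) = x \<Longrightarrow> e \<in> E \<Longrightarrow> (e, True) = p" for e
    using mem[of e True] p unfolding endpt_def by auto
  show ?thesis
  proof (intro bexI[of _ e0] conjI)
    show "fst (ends e0) = x \<or> snd (ends e0) = x" using e0 unfolding endpt_def by (auto split: if_splits)
    show "\<not> (fst (ends e0) = x \<and> snd (ends e0) = x)" using F[of e0] Sn[of e0] e0 by auto
    show "\<forall>e\<in>E. e \<noteq> e0 \<longrightarrow> fst (ends e) \<noteq> x \<and> snd (ends e) \<noteq> x"
    proof (intro ballI impI)
      fix e assume "e \<in> E" "e \<noteq> e0"
      then show "fst (ends e) \<noteq> x \<and> snd (ends e) \<noteq> x" using F[of e] Sn[of e] p0 by auto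
    qed
  qed (use e0 in auto)
qed

definition es :: "'v \<Rightarrow> 'e" where
  "es x = (THE e. e \<in> E \<and> (fst (ends e) = x \<or> snd (ends e) = x))"

lemma es_props:
  assumes "x \<in> S \<union> T"
  shows "es x \<in> E" "fst (ends (es x)) = x \<or> snd (ends (es x)) = x"
    "\<not> (fst (ends (es x)) = x \<and> snd (ends (es x)) = x)"
    "\<And>e. e \<in> E \<Longrightarrow> fst (ends e) = x \<or> snd (ends e) = x \<Longrightarrow> e = es x"
proof -
  obtain e0 where e0: "e0 \<in> E" "fst (ends e0) = x \<or> snd (ends e0) = x"
    "\<not> (fst (ends e0) = x \<and> snd (ends e0) = x)"
    "\<forall>e\<in>E. e \<noteq> e0 \<longrightarrow> fst (ends e) \<noteq> x \<and> snd (ends e) \<noteq> x"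
    using deg_unique[OF assms] by blast
  have eq: "es x = e0" unfolding es_def
    by (rule the_equality) (use e0 in auto)
  show "es x \<in> E" "fst (ends (es x)) = x \<or> snd (ends (es x)) = x"
    "\<not> (fst (ends (es x)) = x \<and> snd (ends (es x)) = x)" using e0 eq by auto
  show "\<And>e. e \<in> E \<Longrightarrow> fst (ends e) = x \<or> snd (ends e) = x \<Longrightarrow> e = es x"
    using e0 eq by auto
qed

lemma es_incident: assumes "x \<in> S \<union> T" shows "incident E ends e x \<longleftrightarrow> e = es x"
proof
  assume "incident E ends e x"
  then show "e = es x" unfolding incident_def using es_props(4)[OF assms, of e] by auto
next
  assume "e = es x"
  then show "incident E ends e x" unfolding incident_def using es_props(1,2)[OF assms] by auto
qed

lemma netout_port:
  assumes "x \<in> S \<union> T"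
  shows "netout g x = (if fst (ends (es x)) = x then g (es x) else - g (es x))"
proof -
  have "netout g x = (\<Sum>e\<in>E. if e = es x then (if fst (ends (es x)) = x then g (es x) else - g (es x)) else 0)"
    unfolding netout_def
  proof (rule sum.cong[OF refl])
    fix e assume e: "e \<in> E"
    show "(if fst (ends e) = x then g e else 0) - (if snd (ends e) = x then g e else 0) =
      (if e = es x then (if fst (ends (es x)) = x then g (es x) else - g (es x)) else 0)"
    proof (cases "e = es x")
      case True
      then show ?thesis using es_props(2,3)[OF assms] by auto
    next
      case False
      then have "fst (ends e) \<noteq> x" "snd (ends e) \<noteq> x" using es_props(4)[OF assms e] by auto
      then show ?thesis using False by simp
    qed
  qed
  also have "\<dots> = (if fst (ends (es x)) = x then g (es x) else - g (es x))"
    using es_props(1)[OF assms] finE by (simp add: sum.delta)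
  finally show ?thesis .
qed

lemma netout_S: "x \<in> S \<Longrightarrow> netout g x = int (a (es x))"
  using netout_port[of x] gfeas unfolding feasible_def a_def by (auto split: if_splits)

lemma utl_uhd: "e \<in> E \<Longrightarrow> {utl e, uhd e} = {fst (ends e), snd (ends e)}"
  unfolding utl_def uhd_def by auto

lemma unit_edge: "u \<in> U \<Longrightarrow> fst u \<in> E \<and> snd u < a (fst u)"
  unfolding U_def by auto

lemma unit_gnz: "u \<in> U \<Longrightarrow> g (fst u) \<noteq> 0"
  unfolding U_def a_def by auto

lemma no_head_S: assumes "u \<in> U" shows "uhd (fst u) \<notin> S"
proof
  assume h: "uhd (fst u) \<in> S"
  let ?e = "fst u" and ?x = "uhd (fst u)"
  have e: "?e \<in> E" using unit_edge[OF assms] by auto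
  have gn: "g ?e \<noteq> 0" using unit_gnz[OF assms] .
  have inc: "fst (ends ?e) = ?x \<or> snd (ends ?e) = ?x" unfolding uhd_def by auto
  then have ese: "?e = es ?x" using es_props(4)[of ?x ?e] h e by auto
  have "netout g ?x \<ge> 0" using h gfeas unfolding feasible_def by auto
  moreover have "netout g ?x = (if fst (ends ?e) = ?x then g ?e else - g ?e)"
    using netout_port[of ?x] h ese by simp
  moreover have "\<not> (fst (ends ?e) = ?x \<and> snd (ends ?e) = ?x)" using es_props(3)[of ?x] h ese by auto
  ultimately show False using gn unfolding uhd_def by (auto split: if_splits)
qed

lemma no_tail_T: assumes "u \<in> U" shows "utl (fst u) \<notin> T"
proof
  assume h: "utl (fst u) \<in> T"
  let ?e = "fst u" and ?x = "utl (fst u)"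
  have e: "?e \<in> E" using unit_edge[OF assms] by auto
  have gn: "g ?e \<noteq> 0" using unit_gnz[OF assms] .
  have inc: "fst (ends ?e) = ?x \<or> snd (ends ?e) = ?x" unfolding utl_def by auto
  then have ese: "?e = es ?x" using es_props(4)[of ?x ?e] h e by auto
  have "netout g ?x \<le> 0" using h gfeas unfolding feasible_def by auto
  moreover have "netout g ?x = (if fst (ends ?e) = ?x then g ?e else - g ?e)"
    using netout_port[of ?x] h ese by simp
  moreover have "\<not> (fst (ends ?e) = ?x \<and> snd (ends ?e) = ?x)" using es_props(3)[of ?x] h ese by auto
  ultimately show False using gn unfolding utl_def by (auto split: if_splits)
qed

lemma card_in_out:
  assumes v: "v \<in> V" shows "card (inU v) = card (outU v)"
proof -
  have ci: "card (inU v) = (\<Sum>e\<in>{e\<in>E. uhd e = v}. a e)"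
  proof -
    have "inU v = Sigma {e\<in>E. uhd e = v} (\<lambda>e. {..<a e})" unfolding inU_def U_def by auto
    then show ?thesis using finE by (simp add: card_SigmaI)
  qed
  have co: "card (outU v) = (\<Sum>e\<in>{e\<in>E. utl e = v}. a e)"
  proof -
    have "outU v = Sigma {e\<in>E. utl e = v} (\<lambda>e. {..<a e})" unfolding outU_def U_def by auto
    then show ?thesis using finE by (simp add: card_SigmaI)
  qed
  have o1: "int (card (outU v)) = (\<Sum>e\<in>E. int (if utl e = v then a e else 0))"
    unfolding co using finE by (simp add: of_nat_sum sum.inter_filter)
  have i1: "int (card (inU v)) = (\<Sum>e\<in>E. int (if uhd e = v then a e else 0))"
    unfolding ci using finE by (simp add: of_nat_sum sum.inter_filter)
  have "int (card (outU v)) - int (card (inU v)) =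
      (\<Sum>e\<in>E. int (if utl e = v then a e else 0) - int (if uhd e = v then a e else 0))"
    unfolding o1 i1 by (simp only: sum_subtractf)
  also have "\<dots> = netout g v"
    unfolding netout_def
    by (rule sum.cong[OF refl]) (auto simp: utl_def uhd_def a_def)
  also have "\<dots> = 0" using gfeas v unfolding feasible_def by auto
  finally show ?thesis by simp
qed

definition sig :: "'v \<Rightarrow> 'e \<times> nat \<Rightarrow> 'e \<times> nat" where
  "sig v = (SOME h. bij_betw h (inU v) (outU v))"

lemma sig_bij: "v \<in> V \<Longrightarrow> bij_betw (sig v) (inU v) (outU v)"
proof -
  assume v: "v \<in> V"
  have "finite (inU v)" "finite (outU v)" using finU unfolding inU_def outU_def by auto
  then have "\<exists>h. bij_betw h (inU v) (outU v)" using card_in_out[OF v] by (rule finite_same_card_bij)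
  then show ?thesis unfolding sig_def by (rule someI_ex)
qed

definition succ :: "'e \<times> nat \<Rightarrow> 'e \<times> nat" where
  "succ u = sig (uhd (fst u)) u"

lemma succ_props:
  assumes "u \<in> U" "uhd (fst u) \<in> V"
  shows "succ u \<in> U" "utl (fst (succ u)) = uhd (fst u)"
proof -
  have "u \<in> inU (uhd (fst u))" using assms unfolding inU_def by auto
  then have "succ u \<in> outU (uhd (fst u))"
    using sig_bij[OF assms(2)] unfolding succ_def bij_betw_def by auto
  then show "succ u \<in> U" "utl (fst (succ u)) = uhd (fst u)" unfolding outU_def by auto
qed

lemma succ_inj:
  assumes "u \<in> U" "uhd (fst u) \<in> V" "u' \<in> U" "uhd (fst u') \<in> V" "succ u = succ u'"
  shows "u = u'"
proof -
  have hh: "uhd (fst u) = uhd (fst u')" using succ_props(2)[OF assms(1,2)] succ_props(2)[OF assms(3,4)] assms(5)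
    by simp
  have "u \<in> inU (uhd (fst u))" "u' \<in> inU (uhd (fst u))" using assms hh unfolding inU_def by auto
  moreover have "inj_on (sig (uhd (fst u))) (inU (uhd (fst u)))"
    using sig_bij[OF assms(2)] by (rule bij_betw_imp_inj_on)
  moreover have "sig (uhd (fst u)) u = sig (uhd (fst u)) u'" using assms(5) hh unfolding succ_def by simp
  ultimately show ?thesis by (meson inj_onD)
qed

definition it :: "nat \<Rightarrow> 'e \<times> nat \<Rightarrow> 'e \<times> nat" where
  "it n u = (succ ^^ n) u"

definition ok :: "'e \<times> nat \<Rightarrow> nat \<Rightarrow> bool" where
  "ok u0 n \<longleftrightarrow> (\<forall>k<n. uhd (fst (it k u0)) \<in> V)"

definition inp :: "'e \<times> nat \<Rightarrow> bool" where
  "inp u0 \<longleftrightarrow> u0 \<in> U \<and> utl (fst u0) \<in> S"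

lemma it_0[simp]: "it 0 u = u" and it_Suc: "it (Suc n) u = succ (it n u)"
  unfolding it_def by auto

lemma it_U: "u0 \<in> U \<Longrightarrow> ok u0 n \<Longrightarrow> it n u0 \<in> U"
proof (induction n)
  case 0 then show ?case by simp
next
  case (Suc n)
  have "ok u0 n" using Suc.prems unfolding ok_def by auto
  then have "it n u0 \<in> U" using Suc by auto
  moreover have "uhd (fst (it n u0)) \<in> V" using Suc.prems unfolding ok_def by auto
  ultimately show ?case by (simp add: it_Suc succ_props)
qed

lemma ok_Suc: "ok u0 (Suc n) \<longleftrightarrow> ok u0 n \<and> uhd (fst (it n u0)) \<in> V"
  unfolding ok_def using less_Suc_eq by auto

lemma it_nonin:
  assumes "inp u0" "ok u0 (Suc n)"
  shows "it (Suc n) u0 \<noteq> u0"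
proof
  assume eq: "it (Suc n) u0 = u0"
  have "it n u0 \<in> U" "uhd (fst (it n u0)) \<in> V" using it_U assms ok_Suc unfolding inp_def by auto
  then have "utl (fst (it (Suc n) u0)) \<in> V" by (simp add: it_Suc succ_props)
  then show False using eq assms(1) disjSV unfolding inp_def by auto
qed

lemma path_uniq:
  assumes "inp u0" "inp u1" "ok u0 n" "ok u1 n'" "it n u0 = it n' u1"
  shows "u0 = u1 \<and> n = n'"
  using assms
proof (induction n arbitrary: n')
  case 0
  show ?case
  proof (cases n')
    case 0 then show ?thesis using "0.prems" by simp
  next
    case (Suc k)
    then have "it (Suc k) u1 \<noteq> u1" using it_nonin "0.prems" by blast
    moreover have "utl (fst (it (Suc k) u1)) \<in> V"
      using it_U[of u1 k] "0.prems" Suc ok_Suc unfolding inp_def by (simp add: it_Suc succ_props)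
    then show ?thesis using "0.prems" Suc disjSV unfolding inp_def by auto
  qed
next
  case (Suc n)
  show ?case
  proof (cases n')
    case 0
    have a0: "it n u0 \<in> U" "uhd (fst (it n u0)) \<in> V"
      using it_U[of u0 n] Suc.prems ok_Suc unfolding inp_def by auto
    have "utl (fst (succ (it n u0))) \<in> V" using succ_props(2)[OF a0] a0(2) by simp
    then have "utl (fst u1) \<in> V" using Suc.prems(5) 0 by (simp add: it_Suc)
    then show ?thesis using Suc.prems(2) disjSV unfolding inp_def by auto
  next
    case (Suc k)
    have a0: "it n u0 \<in> U" "uhd (fst (it n u0)) \<in> V" "ok u0 n"
      using it_U[of u0 n] Suc.prems ok_Suc unfolding inp_def by auto
    have a1: "it k u1 \<in> U" "uhd (fst (it k u1)) \<in> V" "ok u1 k"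
      using it_U[of u1 k] Suc.prems \<open>n' = Suc k\<close> ok_Suc unfolding inp_def by auto
    have "it n u0 = it k u1"
      using succ_inj[OF a0(1,2) a1(1,2)] Suc.prems(5) \<open>n' = Suc k\<close> by (simp add: it_Suc)
    then show ?thesis using Suc.IH[of k] Suc.prems a0 a1 \<open>n' = Suc k\<close> by auto
  qed
qed

lemma path_term:
  assumes "inp u0"
  shows "\<exists>n. ok u0 n \<and> uhd (fst (it n u0)) \<notin> V"
proof (rule ccontr)
  assume "\<not> ?thesis"
  then have nV: "\<And>n. ok u0 n \<Longrightarrow> uhd (fst (it n u0)) \<in> V" by blast
  have all: "ok u0 n" for n
  proof (induction n)
    case 0 show ?case unfolding ok_def by simp
  next
    case (Suc n) then show ?case using nV[OF Suc.IH] ok_Suc by simp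
  qed
  have inU: "it n u0 \<in> U" for n using it_U all assms unfolding inp_def by auto
  have "\<not> inj_on (\<lambda>n. it n u0) {..card U}"
  proof
    assume "inj_on (\<lambda>n. it n u0) {..card U}"
    then have "card {..card U} \<le> card U"
      using card_inj_on_le[of "\<lambda>n. it n u0" "{..card U}" U] finU inU by auto
    then show False by simp
  qed
  then obtain i0 j0 where ij0: "i0 \<noteq> j0" "it i0 u0 = it j0 u0"
    unfolding inj_on_def by blast
  obtain i j where ij: "i < j" "it i u0 = it j u0"
  proof (cases "i0 < j0")
    case True then show ?thesis using that ij0 by blast
  next
    case False then have "j0 < i0" using ij0(1) by simp
    then show ?thesis using that ij0(2) by metis
  qed
  have "it i u0 \<noteq> it j u0" if "i < j" for i j
    using that
  proof (induction i arbitrary: j)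
    case 0
    then obtain k where "j = Suc k" by (cases j) auto
    then show ?case using it_nonin[OF assms all, of k] by (metis it_0)
  next
    case (Suc i)
    then obtain k where k: "j = Suc k" "i < k" by (cases j) auto
    have "it i u0 \<noteq> it k u0" using Suc.IH k by auto
    moreover have "uhd (fst (it i u0)) \<in> V" "uhd (fst (it k u0)) \<in> V"
      using all ok_Suc by blast+
    ultimately show ?case using succ_inj[OF inU _ inU] k by (auto simp: it_Suc)
  qed
  then show False using ij by auto
qed

end

definition dig :: "nat \<Rightarrow> nat \<Rightarrow> nat \<Rightarrow> nat" where
  "dig d n i = n div d ^ i mod d"
definition enc :: "nat \<Rightarrow> nat \<Rightarrow> (nat \<Rightarrow> nat) \<Rightarrow> nat" where
  "enc d k x = (\<Sum>i<k. x i * d ^ i)"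

lemma enc_dig_mod: "enc d k (dig d n) = n mod d ^ k"
proof (induction k)
  case 0 then show ?case by (simp add: enc_def)
next
  case (Suc k)
  have "enc d (Suc k) (dig d n) = n mod d ^ k + (n div d ^ k mod d) * d ^ k"
    using Suc by (simp add: enc_def dig_def)
  also have "\<dots> = n mod (d ^ k * d)" by (simp add: mod_mult2_eq)
  finally show ?case by (simp add: mult.commute)
qed

lemma enc_dig: "n < d ^ k \<Longrightarrow> enc d k (dig d n) = n"
  by (simp add: enc_dig_mod)

lemma enc_lt: "(\<And>i. i < k \<Longrightarrow> x i < d) \<Longrightarrow> enc d k x < d ^ k"
proof (induction k)
  case 0 then show ?case by (simp add: enc_def)
next
  case (Suc k)
  have ih: "enc d k x < d ^ k" using Suc by auto
  have xk: "x k + 1 \<le> d" using Suc.prems[of k] by simp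
  have "enc d (Suc k) x = enc d k x + x k * d ^ k" by (simp add: enc_def)
  also have "\<dots> < d ^ k + x k * d ^ k" using ih by simp
  also have "\<dots> = (x k + 1) * d ^ k" by simp
  also have "\<dots> \<le> d * d ^ k" using xk by (rule mult_right_mono) simp
  finally show ?case by simp
qed

lemma enc_cong: "(\<And>i. i < k \<Longrightarrow> x i = y i) \<Longrightarrow> enc d k x = enc d k y"
  unfolding enc_def by (rule sum.cong) auto

lemma dig_enc:
  assumes "d > 0" "\<And>i. i < k \<Longrightarrow> x i < d" "j < k"
  shows "dig d (enc d k x) j = x j"
  using assms(2,3)
proof (induction k)
  case 0 then show ?case by simp
next
  case (Suc k)
  define A where "A = enc d k x"
  have A: "A < d ^ k" unfolding A_def using Suc.prems by (intro enc_lt) auto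
  have eq: "enc d (Suc k) x = A + x k * d ^ k" by (simp add: enc_def A_def)
  show ?case
  proof (cases "j = k")
    case True
    have "(A + x k * d ^ k) div d ^ k = x k" using A assms(1) by simp
    then show ?thesis using True eq Suc.prems(1)[of k] unfolding dig_def by simp
  next
    case False
    then have jk: "j < k" using Suc.prems by simp
    have pw: "d ^ k = d ^ j * (d * d ^ (k - j - 1))"
      using jk by (simp flip: power_add power_Suc)
    have e2: "x k * d ^ k = (d * (x k * d ^ (k - j - 1))) * d ^ j" unfolding pw by (simp add: ac_simps)
    have "(A + x k * d ^ k) div d ^ j = d * (x k * d ^ (k - j - 1)) + A div d ^ j"
      unfolding e2 by (rule div_mult_self1) (use assms(1) in simp)
    then have "dig d (A + x k * d ^ k) j = dig d A j"
      unfolding dig_def by (simp add: mod_mult_self2 add.commute[of "d * _"])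
    moreover have "dig d A j = x j" unfolding A_def using Suc.IH Suc.prems jk by auto
    ultimately show ?thesis using eq by simp
  qed
qed

lemma dig_lt: "d > 0 \<Longrightarrow> dig d n i < d"
  unfolding dig_def by simp

context lower
begin

definition DD :: "('e \<Rightarrow> nat) \<Rightarrow> 'e \<times> nat \<Rightarrow> nat" where
  "DD W u = dig d (W (fst u)) (snd u)"

definition Qv :: "'v \<Rightarrow> ('e \<Rightarrow> nat) \<Rightarrow> bool" where
  "Qv v W \<longleftrightarrow> (\<forall>e\<in>E. (fst (ends e) = v \<or> snd (ends e) = v) \<longrightarrow> W e < d ^ a e) \<and>
     (\<forall>u\<in>inU v. DD W u = DD W (sig v u))"

definition Tn :: "'v \<Rightarrow> ('e \<times> bool \<Rightarrow> nat) \<Rightarrow> complex" where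
  "Tn v w = (if Qv v (\<lambda>e. w (e, snd (ends e) = v)) then 1 else 0)"

lemma Qv_cong:
  assumes v: "v \<in> V" and eq: "\<And>e. e \<in> E \<Longrightarrow> fst (ends e) = v \<or> snd (ends e) = v \<Longrightarrow> W e = W' e"
  shows "Qv v W = Qv v W'"
proof -
  have in_inc: "fst u \<in> E \<and> (fst (ends (fst u)) = v \<or> snd (ends (fst u)) = v)" if "u \<in> inU v" for u
    using that unfolding inU_def U_def uhd_def by (auto split: if_splits)
  have out_inc: "fst (sig v u) \<in> E \<and> (fst (ends (fst (sig v u))) = v \<or> snd (ends (fst (sig v u))) = v)"
    if "u \<in> inU v" for u
  proof -
    have "sig v u \<in> outU v" using sig_bij[OF v] that unfolding bij_betw_def by auto
    then show ?thesis unfolding outU_def U_def utl_def by (auto split: if_splits)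
  qed
  have "DD W u = DD W' u \<and> DD W (sig v u) = DD W' (sig v u)" if "u \<in> inU v" for u
    using eq in_inc[OF that] out_inc[OF that] unfolding DD_def by auto
  then show ?thesis unfolding Qv_def using eq by auto
qed

lemma Tn_eval:
  assumes "v \<in> V"
  shows "Tn v (\<lambda>(e, b). if (e, b) \<in> ends_at E ends v then W e else 0) = (if Qv v W then 1 else 0)"
proof -
  have "Qv v (\<lambda>e. (\<lambda>(e, b). if (e, b) \<in> ends_at E ends v then W e else 0) (e, snd (ends e) = v)) = Qv v W"
  proof (rule Qv_cong[OF assms])
    fix e assume "e \<in> E" "fst (ends e) = v \<or> snd (ends e) = v"
    then have "(e, snd (ends e) = v) \<in> ends_at E ends v" unfolding ends_at_def endpt_def by auto
    then show "(\<lambda>(e, b). if (e, b) \<in> ends_at E ends v then W e else 0) (e, snd (ends e) = v) = W e" by simp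
  qed
  then show ?thesis unfolding Tn_def by simp
qed

definition Wset :: "('v \<Rightarrow> nat) \<Rightarrow> ('v \<Rightarrow> nat) \<Rightarrow> ('e \<Rightarrow> nat) set" where
  "Wset IT IS = {W \<in> edge_assignments E c.
               (\<forall>u\<in>S. \<forall>e. incident E ends e u \<longrightarrow> W e = IS u) \<and>
               (\<forall>u\<in>T. \<forall>e. incident E ends e u \<longrightarrow> W e = IT u)}"

lemma finite_Wset: "finite (Wset IT IS)"
  unfolding Wset_def using finite_edge_assignments[OF finE] by auto

lemma contract_eval:
  "contract S T V E ends c Tn IT IS = of_nat (card {W \<in> Wset IT IS. \<forall>v\<in>V. Qv v W})"
proof -
  have "contract S T V E ends c Tn IT IS = (\<Sum>W\<in>Wset IT IS. if \<forall>v\<in>V. Qv v W then 1 else 0)"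
    unfolding contract_def Wset_def
  proof (rule sum.cong[OF refl])
    fix W
    have "(\<Prod>v\<in>V. Tn v (\<lambda>(e, b). if (e, b) \<in> ends_at E ends v then W e else 0)) =
          (\<Prod>v\<in>V. if Qv v W then 1 else 0)"
      by (rule prod.cong[OF refl]) (simp add: Tn_eval)
    also have "\<dots> = (if \<forall>v\<in>V. Qv v W then 1 else 0)"
    proof (cases "\<forall>v\<in>V. Qv v W")
      case True then show ?thesis by simp
    next
      case False
      then obtain v where "v \<in> V" "\<not> Qv v W" by auto
      then show ?thesis using finV False by (simp add: prod_zero_iff)
    qed
    finally show "(\<Prod>v\<in>V. Tn v (\<lambda>(e, b). if (e, b) \<in> ends_at E ends v then W e else 0)) =
          (if \<forall>v\<in>V. Qv v W then 1 else 0)" .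
  qed
  also have "\<dots> = (\<Sum>W\<in>{W \<in> Wset IT IS. \<forall>v\<in>V. Qv v W}. 1)"
    by (simp only: sum.inter_filter[OF finite_Wset])
  also have "\<dots> = of_nat (card {W \<in> Wset IT IS. \<forall>v\<in>V. Qv v W})"
    by simp
  finally show ?thesis .
qed

lemma contract_nz:
  "contract S T V E ends c Tn IT IS \<noteq> 0 \<longleftrightarrow> (\<exists>W\<in>Wset IT IS. \<forall>v\<in>V. Qv v W)"
  unfolding contract_eval using finite_Wset by auto

end

context lower
begin

definition onp :: "'e \<times> nat \<Rightarrow> nat \<Rightarrow> 'e \<times> nat \<Rightarrow> bool" where
  "onp u0 n u \<longleftrightarrow> inp u0 \<and> ok u0 n \<and> it n u0 = u"

definition orig :: "'e \<times> nat \<Rightarrow> 'e \<times> nat" where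
  "orig u = fst (SOME p. onp (fst p) (snd p) u)"

lemma orig_eq: assumes "onp u0 n u" shows "orig u = u0"
proof -
  have ex: "\<exists>p. onp (fst p) (snd p) u" using assms by (intro exI[of _ "(u0, n)"]) simp
  have "onp (fst (SOME p. onp (fst p) (snd p) u)) (snd (SOME p. onp (fst p) (snd p) u)) u"
    using someI_ex[OF ex] .
  then show ?thesis using assms path_uniq unfolding orig_def onp_def by blast
qed

definition DIS :: "('v \<Rightarrow> nat) \<Rightarrow> 'e \<times> nat \<Rightarrow> nat" where
  "DIS IS u = (if \<exists>u0 n. onp u0 n u then dig d (IS (utl (fst (orig u)))) (snd (orig u)) else 0)"

definition WIS :: "('v \<Rightarrow> nat) \<Rightarrow> 'e \<Rightarrow> nat" where
  "WIS IS e = (if e \<in> E then enc d (a e) (\<lambda>i. DIS IS (e, i)) else 0)"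

definition Jset :: "('v \<Rightarrow> nat) set" where
  "Jset = {IS. (\<forall>s\<in>S. IS s < d ^ a (es s)) \<and> (\<forall>x. x \<notin> S \<longrightarrow> IS x = 0)}"

definition row :: "('v \<Rightarrow> nat) \<Rightarrow> 'v \<Rightarrow> nat" where
  "row IS = (\<lambda>t. if t \<in> T then WIS IS (es t) else 0)"

lemma DIS_lt: "DIS IS u < d"
  unfolding DIS_def using dpos dig_lt by auto

lemma DIS_onp: assumes p: "onp u0 n u" shows "DIS IS u = dig d (IS (utl (fst u0))) (snd u0)"
proof -
  have "\<exists>u0 n. onp u0 n u" using p by blast
  then show ?thesis unfolding DIS_def using orig_eq[OF p] by simp
qed

lemma DIS_succ:
  assumes u: "u \<in> U" "uhd (fst u) \<in> V"
  shows "DIS IS (succ u) = DIS IS u"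
proof (cases "\<exists>u0 n. onp u0 n u")
  case True
  then obtain u0 n where p: "onp u0 n u" by auto
  then have "onp u0 (Suc n) (succ u)" using u unfolding onp_def by (simp add: ok_Suc it_Suc)
  then show ?thesis using p DIS_onp by simp
next
  case False
  have "\<not> (\<exists>u0 n. onp u0 n (succ u))"
  proof
    assume "\<exists>u0 n. onp u0 n (succ u)"
    then obtain u1 n where p: "onp u1 n (succ u)" by auto
    show False
    proof (cases n)
      case 0
      then have "succ u = u1" using p unfolding onp_def by simp
      then have "utl (fst u1) \<in> V" using succ_props(2)[OF u] u(2) by simp
      then show False using p disjSV unfolding onp_def inp_def by auto
    next
      case (Suc k)
      have a1: "it k u1 \<in> U" "uhd (fst (it k u1)) \<in> V" "ok u1 k"
        using it_U[of u1 k] p Suc ok_Suc unfolding onp_def inp_def by auto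
      have "succ (it k u1) = succ u" using p Suc unfolding onp_def by (simp add: it_Suc)
      then have "it k u1 = u" using succ_inj[OF a1(1,2) u] by simp
      then have "onp u1 k u" using p a1 unfolding onp_def by simp
      then show False using False by blast
    qed
  qed
  then show ?thesis using False unfolding DIS_def by simp
qed

lemma port_tail:
  assumes s: "s \<in> S" and i: "i < a (es s)"
  shows "inp (es s, i)" "utl (es s) = s"
proof -
  have sST: "s \<in> S \<union> T" using s by simp
  have e: "es s \<in> E" using es_props(1)[OF sST] .
  have u: "(es s, i) \<in> U" using e i unfolding U_def by simp
  have "uhd (es s) \<noteq> s" using no_head_S[OF u] s by auto
  then show "utl (es s) = s" using es_props(2)[OF sST] unfolding utl_def uhd_def by (auto split: if_splits)
  then show "inp (es s, i)" using u s unfolding inp_def by simp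
qed

lemma WIS_port:
  assumes IS: "IS \<in> Jset" and s: "s \<in> S"
  shows "WIS IS (es s) = IS s"
proof -
  have sST: "s \<in> S \<union> T" using s by simp
  have e: "es s \<in> E" using es_props(1)[OF sST] .
  have "enc d (a (es s)) (\<lambda>i. DIS IS (es s, i)) = enc d (a (es s)) (dig d (IS s))"
  proof (rule enc_cong)
    fix i assume i: "i < a (es s)"
    have "onp (es s, i) 0 (es s, i)" using port_tail(1)[OF s i] unfolding onp_def ok_def by simp
    then show "DIS IS (es s, i) = dig d (IS s) i" using DIS_onp port_tail(2)[OF s i] by simp
  qed
  also have "\<dots> = IS s" using IS s unfolding Jset_def by (intro enc_dig) auto
  finally show ?thesis unfolding WIS_def using e by simp
qed

lemma WIS_lt: "e \<in> E \<Longrightarrow> WIS IS e < d ^ a e"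
  unfolding WIS_def using DIS_lt by (auto intro: enc_lt)

lemma pow_a_le_c: "e \<in> E \<Longrightarrow> d ^ a e \<le> c e"
  using cpow a_le_m dpos by (simp add: power_increasing)

lemma WIS_assign: "WIS IS \<in> edge_assignments E c"
  unfolding edge_assignments_def using WIS_lt pow_a_le_c
  by (auto intro: less_le_trans simp: WIS_def)

lemma DD_WIS: assumes u: "u \<in> U" shows "DD (WIS IS) u = DIS IS u"
proof -
  obtain e i where ui: "u = (e, i)" by (cases u)
  have ei: "e \<in> E" "i < a e" using unit_edge[OF u] ui by auto
  show ?thesis unfolding DD_def WIS_def ui
    using dig_enc[OF dpos, of "a e" "\<lambda>i. DIS IS (e, i)" i] DIS_lt ei by simp
qed

lemma WIS_Q: assumes v: "v \<in> V" shows "Qv v (WIS IS)"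
  unfolding Qv_def
proof (intro conjI ballI impI)
  fix e assume "e \<in> E" then show "WIS IS e < d ^ a e" by (rule WIS_lt)
next
  fix u assume u: "u \<in> inU v"
  have uU: "u \<in> U" and hv: "uhd (fst u) = v" using u unfolding inU_def by auto
  have sg: "sig v u = succ u" unfolding succ_def hv ..
  have "succ u \<in> U" using succ_props(1)[OF uU] hv v by simp
  then show "DD (WIS IS) u = DD (WIS IS) (sig v u)"
    unfolding sg using DD_WIS uU DIS_succ[OF uU] hv v by simp
qed

lemma WIS_in: assumes "IS \<in> Jset" shows "WIS IS \<in> Wset (row IS) IS"
  unfolding Wset_def
proof (intro CollectI conjI ballI allI impI)
  show "WIS IS \<in> edge_assignments E c" by (rule WIS_assign)
next
  fix u e assume "u \<in> S" "incident E ends e u"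
  then show "WIS IS e = IS u" using es_incident[of u e] WIS_port[OF assms] by auto
next
  fix u e assume "u \<in> T" "incident E ends e u"
  then show "WIS IS e = row IS u" using es_incident[of u e] unfolding row_def by auto
qed

lemma contract_diag: "IS \<in> Jset \<Longrightarrow> contract S T V E ends c Tn (row IS) IS \<noteq> 0"
  using contract_nz WIS_in WIS_Q by blast

lemma contract_off:
  assumes IS: "IS \<in> Jset" and IS': "IS' \<in> Jset" and nz: "contract S T V E ends c Tn (row IS) IS' \<noteq> 0"
  shows "IS' = IS"
proof -
  obtain W where W: "W \<in> Wset (row IS) IS'" "\<forall>v\<in>V. Qv v W" using nz contract_nz by blast
  have Wb: "\<And>u e. u \<in> S \<Longrightarrow> incident E ends e u \<Longrightarrow> W e = IS' u"
    "\<And>u e. u \<in> T \<Longrightarrow> incident E ends e u \<Longrightarrow> W e = row IS u"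
    using W(1) unfolding Wset_def by auto
  have Dsucc: "DD W (succ u) = DD W u" if "u \<in> U" "uhd (fst u) \<in> V" for u
  proof -
    have "u \<in> inU (uhd (fst u))" using that unfolding inU_def by auto
    then show ?thesis using W(2) that(2) unfolding Qv_def succ_def by auto
  qed
  have pconst: "DD W (it n u0) = DD W u0" if "inp u0" "ok u0 n" for u0 n
    using that
  proof (induction n)
    case 0 then show ?case by simp
  next
    case (Suc n)
    have "it n u0 \<in> U" "uhd (fst (it n u0)) \<in> V" "ok u0 n"
      using it_U[of u0 n] Suc.prems ok_Suc unfolding inp_def by auto
    then show ?case using Suc.IH Suc.prems(1) Dsucc by (simp add: it_Suc)
  qed
  have same: "IS' s = IS s" if s: "s \<in> S" for s
  proof -
    have sST: "s \<in> S \<union> T" using s by simp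
    have digeq: "dig d (IS' s) i = dig d (IS s) i" if i: "i < a (es s)" for i
    proof -
      let ?u0 = "(es s, i)"
      have inp0: "inp ?u0" and tl0: "utl (es s) = s" using port_tail[OF s i] by auto
      obtain n where n: "ok ?u0 n" "uhd (fst (it n ?u0)) \<notin> V" using path_term[OF inp0] by blast
      define ou where "ou = it n ?u0"
      have oU: "ou \<in> U" unfolding ou_def using it_U inp0 n(1) unfolding inp_def by auto
      have oE: "fst ou \<in> E" using unit_edge[OF oU] by simp
      define t where "t = uhd (fst ou)"
      have tN: "t \<in> S \<union> T \<union> V" using endsN[OF oE] unfolding t_def uhd_def by auto
      have tT: "t \<in> T" using tN no_head_S[OF oU] n(2) unfolding t_def ou_def by auto
      have inc: "incident E ends (fst ou) t" using oE unfolding incident_def t_def uhd_def by auto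
      have Wo: "W (fst ou) = WIS IS (fst ou)"
        using Wb(2)[OF tT inc] es_incident[of t "fst ou"] tT inc unfolding row_def by auto
      have "DD W ou = DD (WIS IS) ou" unfolding DD_def Wo ..
      also have "\<dots> = DIS IS ou" using DD_WIS[OF oU] .
      also have "\<dots> = dig d (IS s) i"
        using DIS_onp[of ?u0 n ou IS] inp0 n(1) tl0 unfolding onp_def ou_def by simp
      finally have "DD W ou = dig d (IS s) i" .
      moreover have "DD W ou = DD W ?u0" unfolding ou_def by (rule pconst[OF inp0 n(1)])
      moreover have "W (es s) = IS' s" using Wb(1)[OF s] es_incident[OF sST] by auto
      ultimately show ?thesis unfolding DD_def by simp
    qed
    have "IS' s = enc d (a (es s)) (dig d (IS' s))" using IS' s unfolding Jset_def by (simp add: enc_dig)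
    also have "\<dots> = enc d (a (es s)) (dig d (IS s))" by (rule enc_cong) (rule digeq)
    also have "\<dots> = IS s" using IS s unfolding Jset_def by (simp add: enc_dig)
    finally show ?thesis .
  qed
  show ?thesis
  proof (rule ext)
    fix x show "IS' x = IS x"
      using same IS IS' unfolding Jset_def by (cases "x \<in> S") auto
  qed
qed

lemma card_Jset: "card Jset = d ^ nat (fval g)"
proof -
  have "card Jset = (\<Prod>s\<in>S. d ^ a (es s))"
    unfolding Jset_def by (rule bounded_funs(2)[OF finS])
  also have "\<dots> = d ^ (\<Sum>s\<in>S. a (es s))" by (simp add: power_sum)
  also have "(\<Sum>s\<in>S. a (es s)) = nat (fval g)"
  proof -
    have "fval g = (\<Sum>s\<in>S. int (a (es s)))" unfolding fval_def by (rule sum.cong) (auto simp: netout_S)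
    then show ?thesis by (simp flip: of_nat_sum)
  qed
  finally show ?thesis .
qed

lemma Jset_ports: "Jset \<subseteq> port_assignments E ends c S"
proof
  fix IS assume IS: "IS \<in> Jset"
  have "IS u < c e" if "u \<in> S" "incident E ends e u" for u e
  proof -
    have "e = es u" "es u \<in> E" using es_incident[of u e] es_props(1)[of u] that by auto
    then show ?thesis using IS that(1) pow_a_le_c unfolding Jset_def by (auto intro: less_le_trans)
  qed
  then show "IS \<in> port_assignments E ends c S" using IS unfolding Jset_def port_assignments_def by auto
qed

lemma row_ports: "row IS \<in> port_assignments E ends c T"
proof -
  have "row IS u < c e" if "u \<in> T" "incident E ends e u" for u e
  proof -
    have "e = es u" "es u \<in> E" using es_incident[of u e] es_props(1)[of u] that by auto
    then show ?thesis using that(1) WIS_lt pow_a_le_c unfolding row_def by (auto intro: less_le_trans)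
  qed
  then show ?thesis unfolding port_assignments_def row_def by auto
qed

lemma Jset_indep: "lin_indep_cols (port_assignments E ends c T) (contract S T V E ends c Tn) Jset"
  unfolding lin_indep_cols_def
proof (intro allI impI ballI)
  fix co :: "('v \<Rightarrow> nat) \<Rightarrow> complex" and j
  assume h: "\<forall>r\<in>port_assignments E ends c T. (\<Sum>j\<in>Jset. co j * contract S T V E ends c Tn r j) = 0"
    and j: "j \<in> Jset"
  have finJ: "finite Jset" unfolding Jset_def by (rule bounded_funs(1)[OF finS])
  let ?M = "contract S T V E ends c Tn"
  have "(\<Sum>j'\<in>Jset. co j' * ?M (row j) j') = co j * ?M (row j) j + (\<Sum>j'\<in>Jset - {j}. co j' * ?M (row j) j')"
    by (rule sum.remove[OF finJ j])
  also have "(\<Sum>j'\<in>Jset - {j}. co j' * ?M (row j) j') = 0"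
  proof (rule sum.neutral, rule ballI)
    fix j' assume "j' \<in> Jset - {j}"
    then have "?M (row j) j' = 0" using contract_off[OF j, of j'] by auto
    then show "co j' * ?M (row j) j' = 0" by simp
  qed
  finally have "(\<Sum>j'\<in>Jset. co j' * ?M (row j) j') = co j * ?M (row j) j" by simp
  moreover have "(\<Sum>j'\<in>Jset. co j' * ?M (row j) j') = 0" using h row_ports by blast
  ultimately show "co j = 0" using contract_diag[OF j] by simp
qed

lemma rank_lower:
  assumes "finite (port_assignments E ends c S)"
  shows "d ^ nat (fval g) \<le> mat_rank (port_assignments E ends c T) (port_assignments E ends c S)
            (contract S T V E ends c Tn)"
  using mat_rank_ge[OF assms Jset_ports Jset_indep] card_Jset by simp

end

theorem theorem3p8:
  fixes S T V :: "'v set" and E :: "'e set" and ends :: "'e \<Rightarrow> 'v \<times> 'v"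
    and c :: "'e \<Rightarrow> nat" and d :: nat
  assumes "tn_template S T V E ends c"
    and "d > 0"
    and "\<forall>e\<in>E. \<exists>m::nat. c e = d ^ m"
  shows "QMF S T V E ends c = QMC S T V E ends c"
proof -
  note tmpl = assms(1)
  define m where "m = (\<lambda>e. SOME k. c e = d ^ k)"
  have cm: "c e = d ^ m e" if "e \<in> E" for e
    unfolding m_def using assms(3) that by (metis (mono_tags) someI_ex)
  interpret N: netw S T V E ends m
    using tmpl by unfold_locales (auto simp: tn_template_def)
  obtain g Sb Tb where g: "N.feasible g" "Sb \<inter> Tb = {}" "Sb \<union> Tb = S \<union> T \<union> V" "S \<subseteq> Sb" "T \<subseteq> Tb"
    "N.fval g = (\<Sum>e\<in>N.cutset Sb Tb. int (m e))"
    using N.max_flow_min_cut by blast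
  interpret L: lower S T V E ends m c d g
    using tmpl assms(2) cm g(1) by unfold_locales (auto simp: tn_template_def)
  let ?C = "N.cutset Sb Tb"
  let ?R = "port_assignments E ends c T" and ?Cols = "port_assignments E ends c S"
  have cut: "is_edge_cut S T V E ends ?C"
    unfolding is_edge_cut_def N.cutset_def using g(2-5) by blast
  have CE: "?C \<subseteq> E" unfolding N.cutset_def by auto
  have finE: "finite E" using tmpl unfolding tn_template_def by auto
  have prodC: "(\<Prod>e\<in>?C. c e) = d ^ nat (N.fval g)"
  proof -
    have "(\<Prod>e\<in>?C. c e) = (\<Prod>e\<in>?C. d ^ m e)" using CE cm by (intro prod.cong) auto
    also have "\<dots> = d ^ (\<Sum>e\<in>?C. m e)" by (simp add: power_sum)
    also have "(\<Sum>e\<in>?C. m e) = nat (N.fval g)" unfolding g(6) by (simp flip: of_nat_sum)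
    finally show ?thesis .
  qed
  have finCols: "finite ?Cols" by (rule finite_port_assignments[OF tmpl]) auto
  have low: "(\<Prod>e\<in>?C. c e) \<le> mat_rank ?R ?Cols (contract S T V E ends c L.Tn)"
    unfolding prodC by (rule L.rank_lower[OF finCols])
  define QC where "QC = {\<Prod>e\<in>C. c e | C. is_edge_cut S T V E ends C}"
  define QF where "QF = {mat_rank ?R ?Cols (contract S T V E ends c Tn) | Tn. True}"
  have cutE: "C \<subseteq> E" if "is_edge_cut S T V E ends C" for C
    using that unfolding is_edge_cut_def by auto
  have finQC: "finite QC"
  proof -
    have "QC \<subseteq> (\<lambda>C. \<Prod>e\<in>C. c e) ` Pow E" unfolding QC_def using cutE by auto
    moreover have "finite ((\<lambda>C. \<Prod>e\<in>C. c e) ` Pow E)" using finE by simp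
    ultimately show ?thesis by (rule finite_subset)
  qed
  have QCne: "QC \<noteq> {}" unfolding QC_def using cut by auto
  have finQF: "finite QF"
  proof -
    have "QF \<subseteq> {..card ?Cols}" unfolding QF_def using mat_rank_le_card[OF finCols] by auto
    then show ?thesis by (rule finite_subset) simp
  qed
  have QFne: "QF \<noteq> {}" unfolding QF_def by auto
  have QMC_eq: "QMC S T V E ends c = Min QC" unfolding QMC_def QC_def ..
  have QMF_eq: "QMF S T V E ends c = Max QF" unfolding QMF_def QF_def ..
  have le1: "Min QC \<le> Max QF"
  proof -
    have "Min QC \<le> (\<Prod>e\<in>?C. c e)" using finQC cut unfolding QC_def by (intro Min_le) auto
    also have "\<dots> \<le> mat_rank ?R ?Cols (contract S T V E ends c L.Tn)" by (rule low)
    also have "\<dots> \<le> Max QF" using finQF unfolding QF_def by (intro Max_ge) auto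
    finally show ?thesis .
  qed
  have le2: "Max QF \<le> Min QC"
  proof -
    have "Min QC \<in> QC" using finQC QCne by (rule Min_in)
    then obtain C0 where C0: "is_edge_cut S T V E ends C0" "Min QC = (\<Prod>e\<in>C0. c e)"
      unfolding QC_def by auto
    have "x \<le> Min QC" if "x \<in> QF" for x
      using that rank_le_cut[OF tmpl C0(1)] C0(2) unfolding QF_def by auto
    then show ?thesis using finQF QFne by (simp add: Max_le_iff)
  qed
  show ?thesis unfolding QMC_eq QMF_eq using le1 le2 by simp
qed

end
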